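(* Let $a,b>0$ and let $(u,v)\in\mathcal P_{(a,b)}$ with $u\ge0$, $v\ge0$, $u\ne0$, $v\ne0$ and $J(u,v)=C_{(a,b)}$, and suppose that for some $\lambda_1,\lambda_2\in\mathbb R$, $(u,v)$ is a weak solution of $-\partial_{xx}u+(-\Delta)_y^su+\lambda_1u=\mu_1u^{p-1}+\beta r_1u^{r_1-1}v^{r_2}$, $-\partial_{xx}v+(-\Delta)_y^sv+\lambda_2v=\mu_2v^{q-1}+\beta r_2u^{r_1}v^{r_2-1}$ in $\mathbb R^2$. If $\lambda_1>0$ then $u\in S_a$; if $\lambda_2>0$ then $v\in S_b$.
   Context: Standing assumptions: $s\in(\tfrac12,1)$, $\mu_1,\mu_2,\beta>0$, $r_1,r_2>1$, $\frac{2(1+3s)}{1+s}<p,q,r_1+r_2<2_s=\frac{2(1+s)}{1-s}$. $\mathcal H^{1,s}(\mathbb R^2)$: $u\in L^2(\mathbb R^2)$ with $\partial_xu,(-\Delta)_y^{s/2}u\in L^2$ ($(-\Delta)_y^{s/2}$ the fractional Laplacian in $y$ only); $\mathbb D=\mathcal H^{1,s}\times\mathcal H^{1,s}$; $K(u)=\int(|\partial_xu|^2+|(-\Delta)_y^{s/2}u|^2)$. $J(u,v)=\tfrac12K(u)+\tfrac12K(v)-\frac{\mu_1}{p}\|u\|_p^p-\frac{\mu_2}{q}\|v\|_q^q-\beta\int|u|^{r_1}|v|^{r_2}$; $P(u,v)=sK(u)+sK(v)-\frac{(1+s)(p-2)}{2p}\mu_1\|u\|_p^p-\frac{(1+s)(q-2)}{2q}\mu_2\|v\|_q^q-\frac{(1+s)(r_1+r_2-2)}{2}\beta\int|u|^{r_1}|v|^{r_2}$;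 $\mathcal P=\{(u,v)\ne(0,0):P(u,v)=0\}$; $S_a=\{u:\|u\|_2^2=a\}$, $D_a=\{u:\|u\|_2^2\le a\}$; $\mathcal P_{(a,b)}=\mathcal P\cap(D_a\times D_b)$; $C_{(a,b)}=\inf_{\mathcal P_{(a,b)}}J$. *)

theory Defs
  imports "HOL-Analysis.Analysis"
begin

text \<open>Points of the plane are pairs (x,y) :: real \<times> real; x = fst, y = snd.
  Functions are real-valued representatives; integrals are Lebesgue (Bochner) integrals
  w.r.t. lborel.\<close>

definition L2fun :: "(real \<times> real \<Rightarrow> real) \<Rightarrow> bool" where
  "L2fun u \<longleftrightarrow> u \<in> borel_measurable lborel \<and> integrable lborel (\<lambda>z. (u z)\<^sup>2)"

definition L2sq :: "(real \<times> real \<Rightarrow> real) \<Rightarrow> real" where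
  "L2sq u = (\<integral>z. (u z)\<^sup>2 \<partial>lborel)"

definition Lpp :: "real \<Rightarrow> (real \<times> real \<Rightarrow> real) \<Rightarrow> real" where
  "Lpp p u = (\<integral>z. \<bar>u z\<bar> powr p \<partial>lborel)"

definition test_x :: "(real \<times> real \<Rightarrow> real) \<Rightarrow> (real \<times> real \<Rightarrow> real) \<Rightarrow> bool" where
  "test_x phi phix \<longleftrightarrow> continuous_on UNIV phi \<and> continuous_on UNIV phix \<and>
     bounded {z. phi z \<noteq> 0} \<and>
     (\<forall>x y. ((\<lambda>t. phi (t, y)) has_real_derivative phix (x, y)) (at x))"

definition weak_dx :: "(real \<times> real \<Rightarrow> real) \<Rightarrow> (real \<times> real \<Rightarrow> real) \<Rightarrow> bool" where
  "weak_dx u g \<longleftrightarrow> L2fun g \<and>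
     (\<forall>phi phix. test_x phi phix \<longrightarrow>
        integrable lborel (\<lambda>z. u z * phix z) \<and> integrable lborel (\<lambda>z. g z * phi z) \<and>
        (\<integral>z. u z * phix z \<partial>lborel) = - (\<integral>z. g z * phi z \<partial>lborel))"

definition dx :: "(real \<times> real \<Rightarrow> real) \<Rightarrow> (real \<times> real \<Rightarrow> real)" where
  "dx u = (SOME g. weak_dx u g)"

text \<open>Normalising constant C(1,s) of the one-dimensional fractional Laplacian, so that
  norm((-Delta)^(s/2) w)^2 = C(1,s)/2 * double integral of |w(y)-w(y')|^2/|y-y'|^(1+2s).\<close>
definition Cfrac :: "real \<Rightarrow> real" where
  "Cfrac s = s * 4 powr s * Gamma ((1 + 2 * s) / 2) / (sqrt pi * Gamma (1 - s))"

definition gag :: "real \<Rightarrow> (real \<times> real \<Rightarrow> real) \<Rightarrow> (real \<times> real \<Rightarrow> real) \<Rightarrow> real \<times> real \<times> real \<Rightarrow> real" where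
  "gag s u w t = (case t of (x, y, y') \<Rightarrow>
      (u (x, y) - u (x, y')) * (w (x, y) - w (x, y')) / \<bar>y - y'\<bar> powr (1 + 2 * s))"

text \<open>Bilinear form  < (-Delta)_y^(s/2) u, (-Delta)_y^(s/2) w >_{L2}.\<close>
definition Efrac :: "real \<Rightarrow> (real \<times> real \<Rightarrow> real) \<Rightarrow> (real \<times> real \<Rightarrow> real) \<Rightarrow> real" where
  "Efrac s u w = Cfrac s / 2 * (\<integral>t. gag s u w t \<partial>lborel)"

definition H1s :: "real \<Rightarrow> (real \<times> real \<Rightarrow> real) set" where
  "H1s s = {u. L2fun u \<and> (\<exists>g. weak_dx u g) \<and> gag s u u \<in> borel_measurable lborel
               \<and> integrable lborel (gag s u u)}"

definition Kfun :: "real \<Rightarrow> (real \<times> real \<Rightarrow> real) \<Rightarrow> real" where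
  "Kfun s u = (\<integral>z. (dx u z)\<^sup>2 \<partial>lborel) + Efrac s u u"

definition coup :: "real \<Rightarrow> real \<Rightarrow> (real \<times> real \<Rightarrow> real) \<Rightarrow> (real \<times> real \<Rightarrow> real) \<Rightarrow> real" where
  "coup r1 r2 u v = (\<integral>z. \<bar>u z\<bar> powr r1 * \<bar>v z\<bar> powr r2 \<partial>lborel)"

definition Jfun :: "real \<Rightarrow> real \<Rightarrow> real \<Rightarrow> real \<Rightarrow> real \<Rightarrow> real \<Rightarrow> real \<Rightarrow> real \<Rightarrow>
    (real \<times> real \<Rightarrow> real) \<Rightarrow> (real \<times> real \<Rightarrow> real) \<Rightarrow> real" where
  "Jfun s p q r1 r2 mu1 mu2 beta u v =
     Kfun s u / 2 + Kfun s v / 2 - mu1 / p * Lpp p u - mu2 / q * Lpp q v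
     - beta * coup r1 r2 u v"

definition Pfun :: "real \<Rightarrow> real \<Rightarrow> real \<Rightarrow> real \<Rightarrow> real \<Rightarrow> real \<Rightarrow> real \<Rightarrow> real \<Rightarrow>
    (real \<times> real \<Rightarrow> real) \<Rightarrow> (real \<times> real \<Rightarrow> real) \<Rightarrow> real" where
  "Pfun s p q r1 r2 mu1 mu2 beta u v =
     s * Kfun s u + s * Kfun s v
     - (1 + s) * (p - 2) / (2 * p) * mu1 * Lpp p u
     - (1 + s) * (q - 2) / (2 * q) * mu2 * Lpp q v
     - (1 + s) * (r1 + r2 - 2) / 2 * beta * coup r1 r2 u v"

text \<open>(u,v) \<noteq> (0,0) in L2-sense: not both almost everywhere zero.\<close>
definition Pset_ab :: "real \<Rightarrow> real \<Rightarrow> real \<Rightarrow> real \<Rightarrow> real \<Rightarrow> real \<Rightarrow> real \<Rightarrow> real \<Rightarrow> real \<Rightarrow> real \<Rightarrow>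
    ((real \<times> real \<Rightarrow> real) \<times> (real \<times> real \<Rightarrow> real)) set" where
  "Pset_ab s p q r1 r2 mu1 mu2 beta a b =
     {(u, v). u \<in> H1s s \<and> v \<in> H1s s \<and>
        \<not> ((AE z in lborel. u z = 0) \<and> (AE z in lborel. v z = 0)) \<and>
        Pfun s p q r1 r2 mu1 mu2 beta u v = 0 \<and> L2sq u \<le> a \<and> L2sq v \<le> b}"

definition Cab :: "real \<Rightarrow> real \<Rightarrow> real \<Rightarrow> real \<Rightarrow> real \<Rightarrow> real \<Rightarrow> real \<Rightarrow> real \<Rightarrow> real \<Rightarrow> real \<Rightarrow> real" where
  "Cab s p q r1 r2 mu1 mu2 beta a b =
     (INF uv \<in> Pset_ab s p q r1 r2 mu1 mu2 beta a b. Jfun s p q r1 r2 mu1 mu2 beta (fst uv) (snd uv))"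

end

theory Submission
  imports Defs "HOL-Analysis.Analysis"
begin

lemma aff_int:
  fixes c :: "'a::euclidean_space \<Rightarrow> real" and f :: "'a \<Rightarrow> real"
  assumes c: "\<And>j. j \<in> Basis \<Longrightarrow> c j \<noteq> 0" and f[measurable]: "f \<in> borel_measurable borel"
  shows "integral\<^sup>L lborel f = (\<Prod>j\<in>Basis. \<bar>c j\<bar>) * (\<integral>x. f (\<Sum>j\<in>Basis. (c j * (x \<bullet> j)) *\<^sub>R j) \<partial>lborel)"
    and "integrable lborel f \<longleftrightarrow> integrable lborel (\<lambda>x. f (\<Sum>j\<in>Basis. (c j * (x \<bullet> j)) *\<^sub>R j))"
proof -
  define T where "T = (\<lambda>x::'a. (0::'a) + (\<Sum>j\<in>Basis. (c j * (x \<bullet> j)) *\<^sub>R j))"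
  have [measurable]: "T \<in> borel \<rightarrow>\<^sub>M borel" unfolding T_def by simp
  have L: "lborel = density (distr lborel borel T) (\<lambda>_. (\<Prod>j\<in>Basis. \<bar>c j\<bar>))"
    unfolding T_def by (rule lborel_affine_euclidean[OF c])
  have pos: "0 \<le> (\<Prod>j\<in>Basis. \<bar>c j\<bar>)" by (simp add: prod_nonneg)
  have pos2: "0 < (\<Prod>j\<in>Basis. \<bar>c j\<bar>)" using c by (simp add: prod_pos)
  have "integral\<^sup>L lborel f = integral\<^sup>L (density (distr lborel borel T) (\<lambda>_. ennreal (\<Prod>j\<in>Basis. \<bar>c j\<bar>))) f"
    using L by simp
  also have "\<dots> = integral\<^sup>L (distr lborel borel T) (\<lambda>x. (\<Prod>j\<in>Basis. \<bar>c j\<bar>) *\<^sub>R f x)"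
    using pos by (subst integral_density) auto
  also have "\<dots> = (\<integral>x. (\<Prod>j\<in>Basis. \<bar>c j\<bar>) *\<^sub>R f (T x) \<partial>lborel)"
    by (subst integral_distr) auto
  finally show "integral\<^sup>L lborel f = (\<Prod>j\<in>Basis. \<bar>c j\<bar>) * (\<integral>x. f (\<Sum>j\<in>Basis. (c j * (x \<bullet> j)) *\<^sub>R j) \<partial>lborel)"
    unfolding T_def by simp
  have "integrable lborel f \<longleftrightarrow> integrable (density (distr lborel borel T) (\<lambda>_. ennreal (\<Prod>j\<in>Basis. \<bar>c j\<bar>))) f"
    using L by simp
  also have "\<dots> \<longleftrightarrow> integrable (distr lborel borel T) (\<lambda>x. (\<Prod>j\<in>Basis. \<bar>c j\<bar>) *\<^sub>R f x)"
    using pos by (subst integrable_density) auto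
  also have "\<dots> \<longleftrightarrow> integrable lborel (\<lambda>x. (\<Prod>j\<in>Basis. \<bar>c j\<bar>) *\<^sub>R f (T x))"
    by (subst integrable_distr_eq) auto
  also have "\<dots> \<longleftrightarrow> integrable lborel (\<lambda>x. f (T x))"
    using c by simp
  finally show "integrable lborel f \<longleftrightarrow> integrable lborel (\<lambda>x. f (\<Sum>j\<in>Basis. (c j * (x \<bullet> j)) *\<^sub>R j))"
    unfolding T_def by simp
qed

lemma scale2_T:
  fixes al ga :: real
  shows "(\<Sum>j\<in>(Basis::(real\<times>real) set). ((if j = (1,0) then al else ga) * (z \<bullet> j)) *\<^sub>R j) = (al * fst z, ga * snd z)"
  by (cases z) (simp add: Basis_prod_def sum.union_disjoint inner_Pair)

lemma scale3_T:
  fixes al ga :: real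
  shows "(\<Sum>j\<in>(Basis::(real\<times>real\<times>real) set). ((if j = (1,0,0) then al else ga) * (z \<bullet> j)) *\<^sub>R j) = (al * fst z, ga * fst (snd z), ga * snd (snd z))"
  by (cases z) (auto simp add: Basis_prod_def sum.union_disjoint inner_Pair zero_prod_def)

lemma prod2: "(\<Prod>j\<in>(Basis::(real\<times>real) set). \<bar>if j = (1,0) then al else ga\<bar>) = \<bar>al\<bar> * \<bar>ga::real\<bar>"
  by (simp add: Basis_prod_def prod.union_disjoint)

lemma prod3: "(\<Prod>j\<in>(Basis::(real\<times>real\<times>real) set). \<bar>if j = (1,0,0) then al else ga\<bar>) = \<bar>al\<bar> * (\<bar>ga::real\<bar> * \<bar>ga\<bar>)"
  by (auto simp add: Basis_prod_def prod.union_disjoint zero_prod_def)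

lemma int2:
  fixes f :: "real\<times>real \<Rightarrow> real" and al ga :: real
  assumes "al > 0" "ga > 0" and f[measurable]: "f \<in> borel_measurable borel"
  shows "(\<integral>z. f (al * fst z, ga * snd z) \<partial>lborel) = integral\<^sup>L lborel f / (al * ga)"
    and "integrable lborel (\<lambda>z. f (al * fst z, ga * snd z)) \<longleftrightarrow> integrable lborel f"
proof -
  let ?c = "\<lambda>j::real\<times>real. if j = (1,0) then al else ga"
  have c: "\<And>j. j \<in> Basis \<Longrightarrow> ?c j \<noteq> 0" using assms by auto
  show "(\<integral>z. f (al * fst z, ga * snd z) \<partial>lborel) = integral\<^sup>L lborel f / (al * ga)"
    using aff_int(1)[where c="?c", OF c f] assms unfolding scale2_T prod2 by simp
  show "integrable lborel (\<lambda>z. f (al * fst z, ga * snd z)) \<longleftrightarrow> integrable lborel f"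
    using aff_int(2)[where c="?c", OF c f] assms unfolding scale2_T prod2 by simp
qed

lemma int3:
  fixes f :: "real\<times>real\<times>real \<Rightarrow> real" and al ga :: real
  assumes "al > 0" "ga > 0" and f[measurable]: "f \<in> borel_measurable borel"
  shows "(\<integral>z. f (al * fst z, ga * fst (snd z), ga * snd (snd z)) \<partial>lborel) = integral\<^sup>L lborel f / (al * ga * ga)"
    and "integrable lborel (\<lambda>z. f (al * fst z, ga * fst (snd z), ga * snd (snd z))) \<longleftrightarrow> integrable lborel f"
proof -
  let ?c = "\<lambda>j::real\<times>real\<times>real. if j = (1,0,0) then al else ga"
  have c: "\<And>j. j \<in> Basis \<Longrightarrow> ?c j \<noteq> 0" using assms by auto
  show "(\<integral>z. f (al * fst z, ga * fst (snd z), ga * snd (snd z)) \<partial>lborel) = integral\<^sup>L lborel f / (al * ga * ga)"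
    using aff_int(1)[where c="?c", OF c f] assms unfolding scale3_T prod3 by (simp add: field_simps)
  show "integrable lborel (\<lambda>z. f (al * fst z, ga * fst (snd z), ga * snd (snd z))) \<longleftrightarrow> integrable lborel f"
    using aff_int(2)[where c="?c", OF c f] assms unfolding scale3_T prod3 by simp
qed

lemma box_zero_AE:
  fixes h :: "real\<times>real \<Rightarrow> real"
  assumes hm[measurable]: "h \<in> borel_measurable borel"
    and loc: "\<And>a b. integrable lborel (\<lambda>z. h z * indicator (box a b) z)"
    and zero: "\<And>a b. (\<integral>z. h z * indicator (box a b) z \<partial>lborel) = 0"
  shows "AE z in lborel. h z = 0"
proof -
  define M where "M = density lborel (\<lambda>z. ennreal (max 0 (h z)))"
  define N where "N = density lborel (\<lambda>z. ennreal (max 0 (- h z)))"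
  have key: "emeasure M X = emeasure N X" and fin: "emeasure M X \<noteq> \<infinity>"
    if X: "X \<in> range (\<lambda>(a, b). box a b::(real\<times>real) set)" for X
  proof -
    obtain a b where Xd: "X = box a b" using X by auto
    have [measurable]: "X \<in> sets borel" using Xd by simp
    have i1: "integrable lborel (\<lambda>z. max 0 (h z) * indicator X z)"
      by (rule Bochner_Integration.integrable_bound[OF loc[of a b]])
         (auto simp: Xd indicator_def)
    have i2: "integrable lborel (\<lambda>z. max 0 (- h z) * indicator X z)"
      by (rule Bochner_Integration.integrable_bound[OF loc[of a b]])
         (auto simp: Xd indicator_def)
    have "(\<integral>z. h z * indicator X z \<partial>lborel) =
          (\<integral>z. max 0 (h z) * indicator X z \<partial>lborel) - (\<integral>z. max 0 (- h z) * indicator X z \<partial>lborel)"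
      by (subst Bochner_Integration.integral_diff[OF i1 i2, symmetric])
         (auto intro!: Bochner_Integration.integral_cong simp: indicator_def)
    hence eqI: "(\<integral>z. max 0 (h z) * indicator X z \<partial>lborel) = (\<integral>z. max 0 (- h z) * indicator X z \<partial>lborel)"
      using zero[of a b] Xd by simp
    have eM: "emeasure M X = ennreal (\<integral>z. max 0 (h z) * indicator X z \<partial>lborel)"
    proof -
      have "emeasure M X = (\<integral>\<^sup>+z. ennreal (max 0 (h z) * indicator X z) \<partial>lborel)"
        unfolding M_def by (subst emeasure_density) (auto intro!: nn_integral_cong split: split_indicator)
      also have "\<dots> = ennreal (\<integral>z. max 0 (h z) * indicator X z \<partial>lborel)"
        by (rule nn_integral_eq_integral[OF i1]) auto
      finally show ?thesis .
    qed
    have eN: "emeasure N X = ennreal (\<integral>z. max 0 (- h z) * indicator X z \<partial>lborel)"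
    proof -
      have "emeasure N X = (\<integral>\<^sup>+z. ennreal (max 0 (- h z) * indicator X z) \<partial>lborel)"
        unfolding N_def by (subst emeasure_density) (auto intro!: nn_integral_cong split: split_indicator)
      also have "\<dots> = ennreal (\<integral>z. max 0 (- h z) * indicator X z \<partial>lborel)"
        by (rule nn_integral_eq_integral[OF i2]) auto
      finally show ?thesis .
    qed
    show "emeasure M X = emeasure N X" using eM eN eqI by simp
    show "emeasure M X \<noteq> \<infinity>" using eM by simp
  qed
  have "M = N"
  proof (rule measure_eqI_generator_eq[where E="range (\<lambda>(a, b). box a b::(real\<times>real) set)" and \<Omega>=UNIV])
    show "Int_stable (range (\<lambda>(a, b). box a b::(real\<times>real) set))"
      by (auto simp: Int_stable_def box_Int_box)
    show "range (\<lambda>(a, b). box a b::(real\<times>real) set) \<subseteq> Pow UNIV" by simp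
    show "sets M = sigma_sets UNIV (range (\<lambda>(a, b). box a b::(real\<times>real) set))"
      by (simp add: M_def borel_eq_box)
    show "sets N = sigma_sets UNIV (range (\<lambda>(a, b). box a b::(real\<times>real) set))"
      by (simp add: N_def borel_eq_box)
    let ?A = "\<lambda>n::nat. box (- (real n *\<^sub>R One)) (real n *\<^sub>R One) :: (real\<times>real) set"
    show "range ?A \<subseteq> range (\<lambda>(a, b). box a b)" "(\<Union>i. ?A i) = UNIV"
      unfolding UN_box_eq_UNIV by auto
    show "emeasure M (?A i) \<noteq> \<infinity>" for i by (rule fin) auto
  qed (use key in auto)
  hence "AE z in lborel. ennreal (max 0 (h z)) = ennreal (max 0 (- h z))"
    unfolding M_def N_def by (intro sigma_finite_measure.density_unique[OF sigma_finite_lborel]) auto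
  thus ?thesis
    by eventually_elim (auto simp: max_def split: if_splits)
qed

definition qq :: "real \<Rightarrow> real" where "qq t = (max 0 t)\<^sup>2"

lemma qq_deriv: "(qq has_real_derivative (2 * max 0 t)) (at t)"
proof (cases "t = 0")
  case True
  have "((\<lambda>y. (qq y - qq 0) / (y - 0)) \<longlongrightarrow> 0) (at 0)"
  proof -
    have e: "(qq y - qq 0) / (y - 0) = max 0 y" for y
      by (auto simp: qq_def max_def power2_eq_square)
    have "((\<lambda>y. max 0 y) \<longlongrightarrow> max 0 (0::real)) (at 0)"
      by (intro tendsto_intros)
    thus ?thesis unfolding e by simp
  qed
  thus ?thesis using True by (simp add: has_field_derivative_iff)
next
  case False
  show ?thesis
  proof (cases "t > 0")
    case True
    have "((\<lambda>y. y\<^sup>2) has_real_derivative 2 * t) (at t)"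
      by (auto intro!: derivative_eq_intros)
    hence "(qq has_real_derivative 2 * t) (at t)"
      by (rule has_field_derivative_transform_within_open[where S="{0<..}"]) (use True in \<open>auto simp: qq_def\<close>)
    thus ?thesis using True by simp
  next
    case False': False
    have "((\<lambda>y. 0) has_real_derivative 0) (at t)" by simp
    hence "(qq has_real_derivative 0) (at t)"
      by (rule has_field_derivative_transform_within_open[where S="{..<0}"]) (use False False' in \<open>auto simp: qq_def\<close>)
    thus ?thesis using False False' by simp
  qed
qed

definition th :: "real \<Rightarrow> real" where
  "th t = 2 * qq t - 4 * qq (t - 1/2) + 2 * qq (t - 1)"
definition th' :: "real \<Rightarrow> real" where
  "th' t = 4 * max 0 t - 8 * max 0 (t - 1/2) + 4 * max 0 (t - 1)"

lemma qq_shift: "((\<lambda>z. qq (z - c)) has_real_derivative 2 * max 0 (t - c)) (at t)"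
proof -
  have "((\<lambda>z. z - c) has_real_derivative 1) (at t)" by (auto intro!: derivative_eq_intros)
  from DERIV_chain2[OF qq_deriv this] show ?thesis by simp
qed

lemma th_deriv: "(th has_real_derivative th' t) (at t)"
proof -
  have a: "((\<lambda>z. 2 * qq (z - 0)) has_real_derivative 2 * (2 * max 0 (t - 0))) (at t)"
    by (rule DERIV_cmult[OF qq_shift])
  have b: "((\<lambda>z. 4 * qq (z - 1/2)) has_real_derivative 4 * (2 * max 0 (t - 1/2))) (at t)"
    by (rule DERIV_cmult[OF qq_shift])
  have c: "((\<lambda>z. 2 * qq (z - 1)) has_real_derivative 2 * (2 * max 0 (t - 1))) (at t)"
    by (rule DERIV_cmult[OF qq_shift])
  have "((\<lambda>z. 2 * qq (z - 0) - 4 * qq (z - 1/2) + 2 * qq (z - 1)) has_real_derivative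
      2 * (2 * max 0 (t - 0)) - 4 * (2 * max 0 (t - 1/2)) + 2 * (2 * max 0 (t - 1))) (at t)"
    by (intro DERIV_add DERIV_diff a b c)
  thus ?thesis unfolding th_def[abs_def] th'_def by (simp add: algebra_simps)
qed

lemma th_cont: "continuous_on UNIV th" and th'_cont: "continuous_on UNIV th'"
  unfolding th_def[abs_def] th'_def[abs_def] qq_def by (intro continuous_intros)+

lemma th_le0: "t \<le> 0 \<Longrightarrow> th t = 0" by (simp add: th_def qq_def)
lemma th_ge1: "t \<ge> 1 \<Longrightarrow> th t = 1" by (simp add: th_def qq_def max_def power2_eq_square algebra_simps)
lemma th_bnd: "0 \<le> th t \<and> th t \<le> 1"
proof -
  consider "t \<le> 0" | "0 \<le> t \<and> t \<le> 1/2" | "1/2 \<le> t \<and> t \<le> 1" | "t \<ge> 1" by linarith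
  thus ?thesis
  proof cases
    case 2
    have "t * t \<le> (1/2) * (1/2)" using 2 by (intro mult_mono) auto
    moreover have "max 0 (t - 1/2) = 0" "max 0 (t-1) = 0" "max 0 t = t" using 2 by auto
    ultimately show ?thesis using 2 by (simp add: th_def qq_def power2_eq_square)
  next
    case 3
    have "(1-t) * (1-t) \<le> (1/2) * (1/2)" using 3 by (intro mult_mono) auto
    moreover have "max 0 (t - 1/2) = t - 1/2" "max 0 (t-1) = 0" "max 0 t = t" using 3 by auto
    hence "th t = 1 - 2 * ((1-t)*(1-t))" by (simp add: th_def qq_def power2_eq_square algebra_simps)
    ultimately show ?thesis by simp
  qed (auto simp: th_le0 th_ge1)
qed


lemma th_cont_intro[continuous_intros]: "continuous_on S f \<Longrightarrow> continuous_on S (\<lambda>x. th (f x))"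
  using continuous_on_compose2[OF th_cont, of S f] by auto
lemma th'_cont_intro[continuous_intros]: "continuous_on S f \<Longrightarrow> continuous_on S (\<lambda>x. th' (f x))"
  using continuous_on_compose2[OF th'_cont, of S f] by auto

definition bp :: "real \<Rightarrow> real \<Rightarrow> real \<Rightarrow> real \<Rightarrow> real" where
  "bp a b n x = th (n*(x-a)) * th (n*(b-x))"
definition bp' :: "real \<Rightarrow> real \<Rightarrow> real \<Rightarrow> real \<Rightarrow> real" where
  "bp' a b n x = n * th' (n*(x-a)) * th (n*(b-x)) - n * th (n*(x-a)) * th' (n*(b-x))"

lemma bp_deriv: "((bp a b n) has_real_derivative bp' a b n x) (at x)"
proof -
  have d1: "((\<lambda>x. th (n*(x-a))) has_real_derivative th' (n*(x-a)) * n) (at x)"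
    by (rule DERIV_chain2[OF th_deriv]) (auto intro!: derivative_eq_intros)
  have d2: "((\<lambda>x. th (n*(b-x))) has_real_derivative th' (n*(b-x)) * (- n)) (at x)"
    by (rule DERIV_chain2[OF th_deriv]) (auto intro!: derivative_eq_intros)
  show ?thesis unfolding bp_def[abs_def] bp'_def
    using DERIV_mult[OF d1 d2] by (simp add: algebra_simps)
qed

lemma bp_nz: "n > 0 \<Longrightarrow> bp a b n x \<noteq> 0 \<Longrightarrow> a < x \<and> x < b"
proof -
  assume n: "n > 0" and nz: "bp a b n x \<noteq> 0"
  have "th (n*(x-a)) \<noteq> 0" "th (n*(b-x)) \<noteq> 0" using nz by (auto simp: bp_def)
  hence "n*(x-a) > 0" "n*(b-x) > 0" using th_le0 by (metis not_le)+
  thus ?thesis using n by (simp add: zero_less_mult_iff)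
qed

lemma bp_bnd: "0 \<le> bp a b n x \<and> bp a b n x \<le> 1"
  using th_bnd[of "n*(x-a)"] th_bnd[of "n*(b-x)"] unfolding bp_def
  by (auto intro: mult_le_one)

lemma bp_lim: "(\<lambda>k. bp a b (real (Suc k)) x) \<longlonglongrightarrow> (if a < x \<and> x < b then 1 else 0)"
proof (cases "a < x \<and> x < b")
  case True
  obtain N :: nat where N: "1 / min (x-a) (b-x) < real N" using reals_Archimedean2 by blast
  have ev: "\<forall>\<^sub>F k in sequentially. bp a b (real (Suc k)) x = 1"
    unfolding eventually_sequentially
  proof (intro exI allI impI)
    fix k assume "N \<le> k"
    hence kN: "1 / min (x-a) (b-x) < real (Suc k)" using N by linarith
    have m: "min (x-a) (b-x) > 0" using True by auto
    hence "1 < real (Suc k) * min (x-a) (b-x)" using kN by (simp add: field_simps)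
    hence "1 \<le> real (Suc k) * (x-a)" "1 \<le> real (Suc k) * (b-x)"
      by (smt (verit) m mult_left_mono of_nat_0_le_iff min.cobounded1 min.cobounded2)+
    thus "bp a b (real (Suc k)) x = 1" by (simp add: bp_def th_ge1)
  qed
  have "(if a < x \<and> x < b then 1 else 0) = (1::real)" using True by simp
  thus ?thesis using tendsto_eventually[OF ev] by simp
next
  case False
  have "bp a b (real (Suc k)) x = 0" for k
    using bp_nz[of "real (Suc k)" a b x] False by auto
  moreover have "(if a < x \<and> x < b then 1 else 0) = (0::real)" using False by simp
  ultimately show ?thesis by simp
qed

definition phin :: "real\<times>real \<Rightarrow> real\<times>real \<Rightarrow> real \<Rightarrow> real\<times>real \<Rightarrow> real" where
  "phin a b n z = bp (fst a) (fst b) n (fst z) * bp (snd a) (snd b) n (snd z)"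
definition phixn :: "real\<times>real \<Rightarrow> real\<times>real \<Rightarrow> real \<Rightarrow> real\<times>real \<Rightarrow> real" where
  "phixn a b n z = bp' (fst a) (fst b) n (fst z) * bp (snd a) (snd b) n (snd z)"

lemma mem_box2: "(z::real\<times>real) \<in> box a b \<longleftrightarrow> fst a < fst z \<and> fst z < fst b \<and> snd a < snd z \<and> snd z < snd b"
  by (cases z; cases a; cases b) (auto simp: box_def Basis_prod_def inner_Pair)

lemma test_phin: "n > 0 \<Longrightarrow> test_x (phin a b n) (phixn a b n)"
  unfolding test_x_def
proof (intro conjI allI)
  assume n: "n > 0"
  show "continuous_on UNIV (phin a b n)" unfolding phin_def[abs_def] bp_def
    by (intro continuous_intros)
  show "continuous_on UNIV (phixn a b n)" unfolding phixn_def[abs_def] bp_def bp'_def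
    by (intro continuous_intros)
  have "{z. phin a b n z \<noteq> 0} \<subseteq> cbox a b"
  proof
    fix z assume "z \<in> {z. phin a b n z \<noteq> 0}"
    hence "bp (fst a) (fst b) n (fst z) \<noteq> 0" "bp (snd a) (snd b) n (snd z) \<noteq> 0"
      by (auto simp: phin_def)
    hence "z \<in> box a b" using bp_nz[OF n] by (auto simp: mem_box2)
    thus "z \<in> cbox a b" using box_subset_cbox by blast
  qed
  thus "bounded {z. phin a b n z \<noteq> 0}" by (rule bounded_subset[OF bounded_cbox])
  fix x y
  show "((\<lambda>t. phin a b n (t, y)) has_real_derivative phixn a b n (x, y)) (at x)"
    unfolding phin_def phixn_def fst_conv snd_conv by (rule DERIV_cmult_right[OF bp_deriv])
qed

lemma phin_lim: "(\<lambda>k. phin a b (real (Suc k)) z) \<longlonglongrightarrow> indicator (box a b) z"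
proof -
  have "(\<lambda>k. phin a b (real (Suc k)) z) \<longlonglongrightarrow>
     (if fst a < fst z \<and> fst z < fst b then 1 else 0) * (if snd a < snd z \<and> snd z < snd b then 1 else 0)"
    unfolding phin_def by (intro tendsto_mult bp_lim)
  moreover have "(if fst a < fst z \<and> fst z < fst b then 1 else 0) * (if snd a < snd z \<and> snd z < snd b then 1 else 0) = (indicator (box a b) z :: real)"
    by (simp add: indicator_def mem_box2)
  ultimately show ?thesis by simp
qed

lemma phin_bnd: "\<bar>phin a b n z\<bar> \<le> 1"
  using bp_bnd[of "fst a" "fst b" n "fst z"] bp_bnd[of "snd a" "snd b" n "snd z"]
  by (auto simp: phin_def abs_mult intro: mult_le_one)

lemma phin_supp: "n > 0 \<Longrightarrow> phin a b n z \<noteq> 0 \<Longrightarrow> z \<in> box a b"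
proof -
  assume n: "n > 0" and nz: "phin a b n z \<noteq> 0"
  have "bp (fst a) (fst b) n (fst z) \<noteq> 0" "bp (snd a) (snd b) n (snd z) \<noteq> 0"
    using nz by (auto simp: phin_def)
  from bp_nz[OF n this(1)] bp_nz[OF n this(2)] show ?thesis by (simp add: mem_box2)
qed

lemma phin_meas[measurable]: "phin a b n \<in> borel_measurable borel"
proof -
  have "continuous_on UNIV (phin a b n)" unfolding phin_def[abs_def] bp_def
    by (intro continuous_intros)
  thus ?thesis by (rule borel_measurable_continuous_onI)
qed

lemma abs_le_sq: "\<bar>x::real\<bar> \<le> x\<^sup>2 + 1/2"
proof -
  have "0 \<le> (\<bar>x\<bar> - 1/2)\<^sup>2" by simp
  hence "0 \<le> \<bar>x\<bar>*\<bar>x\<bar> - \<bar>x\<bar> + 1/4" by (simp add: power2_eq_square algebra_simps)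
  thus ?thesis by (simp add: power2_eq_square abs_mult_self_eq)
qed

lemma weak_dx_unique:
  assumes w1: "weak_dx u g1" and w2: "weak_dx u g2"
  shows "AE z in lborel. g1 z = g2 z"
proof -
  have m1[measurable]: "g1 \<in> borel_measurable borel" and i1: "integrable lborel (\<lambda>z. (g1 z)\<^sup>2)"
    using w1 by (auto simp: weak_dx_def L2fun_def)
  have m2[measurable]: "g2 \<in> borel_measurable borel" and i2: "integrable lborel (\<lambda>z. (g2 z)\<^sup>2)"
    using w2 by (auto simp: weak_dx_def L2fun_def)
  define h where "h z = g1 z - g2 z" for z
  have hm[measurable]: "h \<in> borel_measurable borel" unfolding h_def[abs_def] by simp
  have loc: "integrable lborel (\<lambda>z. h z * indicator (box a b) z)" for a b
  proof (rule Bochner_Integration.integrable_bound)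
    have "integrable lborel (indicator (box a b) :: _ \<Rightarrow> real)"
      using emeasure_bounded_finite[OF bounded_box[of a b]] by (intro integrable_real_indicator) auto
    thus "integrable lborel (\<lambda>z. (g1 z)\<^sup>2 + (g2 z)\<^sup>2 + indicator (box a b) z)"
      using i1 i2 by auto
    show "(\<lambda>z. h z * indicator (box a b) z) \<in> borel_measurable lborel" by simp
    show "AE z in lborel. norm (h z * indicator (box a b) z) \<le> norm ((g1 z)\<^sup>2 + (g2 z)\<^sup>2 + indicator (box a b) z)"
    proof (rule AE_I2)
      fix z
      have a: "\<bar>g1 z\<bar> \<le> (g1 z)\<^sup>2 + 1/2" by (rule abs_le_sq)
      have b: "\<bar>g2 z\<bar> \<le> (g2 z)\<^sup>2 + 1/2" by (rule abs_le_sq)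
      show "norm (h z * indicator (box a b) z) \<le> norm ((g1 z)\<^sup>2 + (g2 z)\<^sup>2 + indicator (box a b) z)"
        using a b by (auto simp: h_def indicator_def)
    qed
  qed
  have zero: "(\<integral>z. h z * indicator (box a b) z \<partial>lborel) = 0" for a b
  proof -
    let ?s = "\<lambda>k z. h z * phin a b (real (Suc k)) z"
    have lim: "(\<lambda>k. integral\<^sup>L lborel (?s k)) \<longlonglongrightarrow> (\<integral>z. h z * indicator (box a b) z \<partial>lborel)"
    proof (rule integral_dominated_convergence[where w="\<lambda>z. \<bar>h z * indicator (box a b) z\<bar>"])
      show "integrable lborel (\<lambda>z. \<bar>h z * indicator (box a b) z\<bar>)" using loc by auto
      show "AE z in lborel. (\<lambda>k. ?s k z) \<longlonglongrightarrow> h z * indicator (box a b) z"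
        by (intro AE_I2 tendsto_mult tendsto_const phin_lim)
      show "AE z in lborel. norm (?s k z) \<le> \<bar>h z * indicator (box a b) z\<bar>" for k
      proof (rule AE_I2)
        fix z
        show "norm (?s k z) \<le> \<bar>h z * indicator (box a b) z\<bar>"
        proof (cases "z \<in> box a b")
          case True
          thus ?thesis using phin_bnd[of a b "real (Suc k)" z]
            by (auto simp: abs_mult intro: mult_left_le)
        next
          case False
          hence "phin a b (real (Suc k)) z = 0" using phin_supp[of "real (Suc k)" a b z] by auto
          thus ?thesis by simp
        qed
      qed
    qed auto
    have "integral\<^sup>L lborel (?s k) = 0" for k
    proof -
      have t: "test_x (phin a b (real (Suc k))) (phixn a b (real (Suc k)))" by (rule test_phin) simp
      have e1: "integrable lborel (\<lambda>z. g1 z * phin a b (real (Suc k)) z)"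
        "(\<integral>z. u z * phixn a b (real (Suc k)) z \<partial>lborel) = - (\<integral>z. g1 z * phin a b (real (Suc k)) z \<partial>lborel)"
        using w1 t unfolding weak_dx_def by blast+
      have e2: "integrable lborel (\<lambda>z. g2 z * phin a b (real (Suc k)) z)"
        "(\<integral>z. u z * phixn a b (real (Suc k)) z \<partial>lborel) = - (\<integral>z. g2 z * phin a b (real (Suc k)) z \<partial>lborel)"
        using w2 t unfolding weak_dx_def by blast+
      have "integral\<^sup>L lborel (?s k) = (\<integral>z. g1 z * phin a b (real (Suc k)) z \<partial>lborel) - (\<integral>z. g2 z * phin a b (real (Suc k)) z \<partial>lborel)"
        unfolding h_def by (subst Bochner_Integration.integral_diff[OF e1(1) e2(1), symmetric]) (simp add: algebra_simps)
      thus ?thesis using e1(2) e2(2) by simp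
    qed
    hence "(\<lambda>k. integral\<^sup>L lborel (?s k)) \<longlonglongrightarrow> 0" by simp
    thus ?thesis using lim LIMSEQ_unique by blast
  qed
  have "AE z in lborel. h z = 0" by (rule box_zero_AE[OF hm loc zero])
  thus ?thesis by eventually_elim (simp add: h_def)
qed

definition Sc :: "real \<Rightarrow> real \<Rightarrow> real \<Rightarrow> (real\<times>real \<Rightarrow> real) \<Rightarrow> (real\<times>real \<Rightarrow> real)" where
  "Sc c al ga u = (\<lambda>z. c * u (al * fst z, ga * snd z))"

lemma lin_meas[measurable]: "(\<lambda>z::real\<times>real. (al * fst z, ga * snd z)) \<in> borel \<rightarrow>\<^sub>M borel"
  by (intro borel_measurable_continuous_onI continuous_intros)

lemma Sc_meas[measurable]: "u \<in> borel_measurable borel \<Longrightarrow> Sc c al ga u \<in> borel_measurable borel"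
  unfolding Sc_def
  using measurable_compose[OF lin_meas[of al ga], of u borel]
  by (intro borel_measurable_times borel_measurable_const) auto

lemma L2fun_meas: "L2fun u \<Longrightarrow> u \<in> borel_measurable borel"
  by (simp add: L2fun_def)

lemma Sc_L2:
  assumes al: "al > 0" and ga: "ga > 0" and u: "L2fun u"
  shows "L2fun (Sc c al ga u)" "L2sq (Sc c al ga u) = c\<^sup>2 / (al * ga) * L2sq u"
proof -
  have um[measurable]: "u \<in> borel_measurable borel" using u by (simp add: L2fun_def)
  have f[measurable]: "(\<lambda>z. c\<^sup>2 * (u z)\<^sup>2) \<in> borel_measurable borel" by simp
  have e: "(\<lambda>z. (Sc c al ga u z)\<^sup>2) = (\<lambda>z. (\<lambda>z. c\<^sup>2 * (u z)\<^sup>2) (al * fst z, ga * snd z))"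
    by (simp add: Sc_def power_mult_distrib)
  have "integrable lborel (\<lambda>z. c\<^sup>2 * (u z)\<^sup>2)" using u by (simp add: L2fun_def)
  thus "L2fun (Sc c al ga u)" unfolding L2fun_def e using int2(2)[OF al ga f] by simp
  show "L2sq (Sc c al ga u) = c\<^sup>2 / (al * ga) * L2sq u"
    unfolding L2sq_def e int2(1)[OF al ga f] by simp
qed

lemma test_x_scale:
  assumes al: "al > 0" and ga: "ga > 0" and t: "test_x phi phix"
  shows "test_x (\<lambda>z. phi (fst z / al, snd z / ga)) (\<lambda>z. phix (fst z / al, snd z / ga) / al)"
  unfolding test_x_def
proof (intro conjI allI)
  have c1: "continuous_on UNIV phi" and c2: "continuous_on UNIV phix"
    and b: "bounded {z. phi z \<noteq> 0}"
    and d: "\<And>x y. ((\<lambda>t. phi (t, y)) has_real_derivative phix (x, y)) (at x)"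
    using t by (auto simp: test_x_def)
  have L: "continuous_on UNIV (\<lambda>z::real\<times>real. (fst z / al, snd z / ga))"
    by (intro continuous_intros) (use al ga in auto)
  show "continuous_on UNIV (\<lambda>z. phi (fst z / al, snd z / ga))"
    using continuous_on_compose2[OF c1 L] by auto
  show "continuous_on UNIV (\<lambda>z. phix (fst z / al, snd z / ga) / al)"
    using continuous_on_compose2[OF c2 L] continuous_on_divide[OF _ continuous_on_const, of UNIV "\<lambda>x. phix (fst x / al, snd x / ga)" al] al by auto
  have "{z. phi (fst z / al, snd z / ga) \<noteq> 0} = (\<lambda>z. (al * fst z, ga * snd z)) ` {z. phi z \<noteq> 0}"
  proof (rule set_eqI)
    fix z :: "real\<times>real"
    show "z \<in> {z. phi (fst z / al, snd z / ga) \<noteq> 0} \<longleftrightarrow> z \<in> (\<lambda>z. (al * fst z, ga * snd z)) ` {z. phi z \<noteq> 0}"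
    proof
      assume "z \<in> {z. phi (fst z / al, snd z / ga) \<noteq> 0}"
      thus "z \<in> (\<lambda>z. (al * fst z, ga * snd z)) ` {z. phi z \<noteq> 0}"
        using al ga by (intro image_eqI[of _ _ "(fst z/al, snd z/ga)"]) auto
    next
      assume "z \<in> (\<lambda>z. (al * fst z, ga * snd z)) ` {z. phi z \<noteq> 0}"
      then obtain w where "phi w \<noteq> 0" "z = (al * fst w, ga * snd w)" by auto
      thus "z \<in> {z. phi (fst z / al, snd z / ga) \<noteq> 0}" using al ga by simp
    qed
  qed
  moreover have "bounded_linear (\<lambda>z::real\<times>real. (al * fst z, ga * snd z))"
    by (intro bounded_linear_Pair bounded_linear_compose[OF bounded_linear_mult_right] bounded_linear_fst bounded_linear_snd)
  ultimately show "bounded {z. phi (fst z / al, snd z / ga) \<noteq> 0}"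
    using bounded_linear_image[OF b] by simp
  fix x y
  have "((\<lambda>t. t / al) has_real_derivative 1 / al) (at x)" using al by (auto intro!: derivative_eq_intros)
  from DERIV_chain2[OF d this] show "((\<lambda>t. phi (fst (t, y) / al, snd (t, y) / ga)) has_real_derivative phix (fst (x, y) / al, snd (x, y) / ga) / al) (at x)"
    by simp
qed

lemma Sc_weak_dx:
  assumes al: "al > 0" and ga: "ga > 0" and w: "weak_dx u g" and um[measurable]: "u \<in> borel_measurable borel"
  shows "weak_dx (Sc c al ga u) (Sc (c * al) al ga g)"
  unfolding weak_dx_def
proof (intro conjI allI impI)
  have gL: "L2fun g" using w by (simp add: weak_dx_def)
  have gm[measurable]: "g \<in> borel_measurable borel" using gL by (simp add: L2fun_def)
  show "L2fun (Sc (c * al) al ga g)" by (rule Sc_L2(1)[OF al ga gL])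
  fix phi phix assume t: "test_x phi phix"
  define psi where "psi = (\<lambda>z. phi (fst z / al, snd z / ga))"
  define psix where "psix = (\<lambda>z. phix (fst z / al, snd z / ga) / al)"
  have tp: "test_x psi psix" unfolding psi_def psix_def by (rule test_x_scale[OF al ga t])
  have pm[measurable]: "phi \<in> borel_measurable borel" "phix \<in> borel_measurable borel"
    using t by (auto simp: test_x_def intro: borel_measurable_continuous_onI)
  have qm[measurable]: "psi \<in> borel_measurable borel" "psix \<in> borel_measurable borel"
    using tp by (auto simp: test_x_def intro: borel_measurable_continuous_onI)
  have w1: "integrable lborel (\<lambda>z. u z * psix z)" "integrable lborel (\<lambda>z. g z * psi z)"
    "(\<integral>z. u z * psix z \<partial>lborel) = - (\<integral>z. g z * psi z \<partial>lborel)"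
    using w tp unfolding weak_dx_def by blast+
  have e1: "(\<lambda>z. Sc c al ga u z * phix z) = (\<lambda>z. (\<lambda>z. c * al * (u z * psix z)) (al * fst z, ga * snd z))"
    using al ga by (auto simp: Sc_def psix_def)
  have e2: "(\<lambda>z. Sc (c * al) al ga g z * phi z) = (\<lambda>z. (\<lambda>z. c * al * (g z * psi z)) (al * fst z, ga * snd z))"
    using al ga by (auto simp: Sc_def psi_def)
  have m1[measurable]: "(\<lambda>z. c * al * (u z * psix z)) \<in> borel_measurable borel" by simp
  have m2[measurable]: "(\<lambda>z. c * al * (g z * psi z)) \<in> borel_measurable borel" by simp
  show "integrable lborel (\<lambda>z. Sc c al ga u z * phix z)"
    unfolding e1 int2(2)[OF al ga m1] using w1(1) by simp
  show "integrable lborel (\<lambda>z. Sc (c * al) al ga g z * phi z)"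
    unfolding e2 int2(2)[OF al ga m2] using w1(2) by simp
  show "(\<integral>z. Sc c al ga u z * phix z \<partial>lborel) = - (\<integral>z. Sc (c * al) al ga g z * phi z \<partial>lborel)"
    unfolding e1 e2 int2(1)[OF al ga m1] int2(1)[OF al ga m2] using w1(3) by simp
qed

lemma lin3_meas[measurable]: "(\<lambda>z::real\<times>real\<times>real. (al * fst z, ga * fst (snd z), ga * snd (snd z))) \<in> borel \<rightarrow>\<^sub>M borel"
  by (intro borel_measurable_continuous_onI continuous_intros)

lemma gag_Sc:
  assumes ga: "ga > 0"
  shows "gag s (Sc c al ga u) (Sc c al ga u) t = c\<^sup>2 * ga powr (1 + 2 * s) * gag s u u (al * fst t, ga * fst (snd t), ga * snd (snd t))"
proof -
  obtain x y y' where t: "t = (x, y, y')" by (cases t) auto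
  have "\<bar>ga * y - ga * y'\<bar> powr (1 + 2 * s) = ga powr (1 + 2 * s) * \<bar>y - y'\<bar> powr (1 + 2 * s)"
    using ga by (simp add: right_diff_distrib[symmetric] abs_mult powr_mult)
  moreover have G: "ga powr (1 + 2 * s) > 0" using ga by simp
  ultimately have r: "gag s u u (al * fst t, ga * fst (snd t), ga * snd (snd t)) =
     (u (al * x, ga * y) - u (al * x, ga * y')) * (u (al * x, ga * y) - u (al * x, ga * y')) /
     (ga powr (1 + 2 * s) * \<bar>y - y'\<bar> powr (1 + 2 * s))"
    unfolding t gag_def by simp
  have l: "gag s (Sc c al ga u) (Sc c al ga u) t = (c * (u (al * x, ga * y) - u (al * x, ga * y'))) *
     (c * (u (al * x, ga * y) - u (al * x, ga * y'))) / \<bar>y - y'\<bar> powr (1 + 2 * s)"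
    unfolding t gag_def Sc_def by (simp add: right_diff_distrib)
  show ?thesis unfolding r l using G
    by (cases "\<bar>y - y'\<bar> powr (1 + 2 * s) = 0") (simp_all add: power2_eq_square field_simps)
qed

lemma H1s_meas: "u \<in> H1s s \<Longrightarrow> u \<in> borel_measurable borel"
  by (simp add: H1s_def L2fun_def)

lemma gag_meas: "u \<in> H1s s \<Longrightarrow> gag s u u \<in> borel_measurable borel"
  by (simp add: H1s_def)

lemma Sc_gag:
  assumes al: "al > 0" and ga: "ga > 0" and u: "u \<in> H1s s"
  shows "gag s (Sc c al ga u) (Sc c al ga u) \<in> borel_measurable borel"
    and "integrable lborel (gag s (Sc c al ga u) (Sc c al ga u))"
    and "Efrac s (Sc c al ga u) (Sc c al ga u) = c\<^sup>2 * ga powr (1 + 2 * s) / (al * ga * ga) * Efrac s u u"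
proof -
  have gm[measurable]: "gag s u u \<in> borel_measurable borel" using u by (simp add: H1s_def)
  have gi: "integrable lborel (gag s u u)" using u by (simp add: H1s_def)
  define K where "K = c\<^sup>2 * ga powr (1 + 2 * s)"
  have fm[measurable]: "(\<lambda>z. K * gag s u u z) \<in> borel_measurable borel" by simp
  have e: "gag s (Sc c al ga u) (Sc c al ga u) = (\<lambda>t. (\<lambda>z. K * gag s u u z) (al * fst t, ga * fst (snd t), ga * snd (snd t)))"
    using gag_Sc[OF ga] unfolding K_def by (intro ext) simp
  show "gag s (Sc c al ga u) (Sc c al ga u) \<in> borel_measurable borel"
    unfolding e by (intro measurable_compose[OF lin3_meas fm])
  show "integrable lborel (gag s (Sc c al ga u) (Sc c al ga u))"
    unfolding e int3(2)[OF al ga fm] using gi by simp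
  show "Efrac s (Sc c al ga u) (Sc c al ga u) = c\<^sup>2 * ga powr (1 + 2 * s) / (al * ga * ga) * Efrac s u u"
  proof -
    have "integral\<^sup>L lborel (gag s (Sc c al ga u) (Sc c al ga u)) =
        (\<integral>t. (\<lambda>z. K * gag s u u z) (al * fst t, ga * fst (snd t), ga * snd (snd t)) \<partial>lborel)"
      by (simp only: e)
    also have "\<dots> = integral\<^sup>L lborel (\<lambda>z. K * gag s u u z) / (al * ga * ga)"
      by (rule int3(1)[OF al ga fm])
    also have "\<dots> = K * integral\<^sup>L lborel (gag s u u) / (al * ga * ga)" by simp
    finally show ?thesis unfolding Efrac_def K_def using al ga by (simp add: field_simps)
  qed
qed

lemma dx_works: "(\<exists>g. weak_dx u g) \<Longrightarrow> weak_dx u (dx u)"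
  unfolding dx_def by (metis someI_ex)

lemma Sc_H1s:
  assumes al: "al > 0" and ga: "ga > 0" and u: "u \<in> H1s s"
  shows "Sc c al ga u \<in> H1s s"
    and "(\<integral>z. (dx (Sc c al ga u) z)\<^sup>2 \<partial>lborel) = c\<^sup>2 * al / ga * (\<integral>z. (dx u z)\<^sup>2 \<partial>lborel)"
proof -
  have uL: "L2fun u" and ex: "\<exists>g. weak_dx u g" using u by (auto simp: H1s_def)
  have um[measurable]: "u \<in> borel_measurable borel" using uL by (simp add: L2fun_def)
  have wu: "weak_dx u (dx u)" by (rule dx_works[OF ex])
  have ws: "weak_dx (Sc c al ga u) (Sc (c * al) al ga (dx u))"
    by (rule Sc_weak_dx[OF al ga wu um])
  show "Sc c al ga u \<in> H1s s"
    unfolding H1s_def using Sc_L2(1)[OF al ga uL] ws Sc_gag(1,2)[OF al ga u] by blast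
  have wd: "weak_dx (Sc c al ga u) (dx (Sc c al ga u))" by (rule dx_works) (use ws in blast)
  have ae: "AE z in lborel. dx (Sc c al ga u) z = Sc (c * al) al ga (dx u) z"
    by (rule weak_dx_unique[OF wd ws])
  have "(\<integral>z. (dx (Sc c al ga u) z)\<^sup>2 \<partial>lborel) = (\<integral>z. (Sc (c * al) al ga (dx u) z)\<^sup>2 \<partial>lborel)"
  proof (rule integral_cong_AE)
    have "dx (Sc c al ga u) \<in> borel_measurable borel" using wd by (simp add: weak_dx_def L2fun_def)
    thus "(\<lambda>z. (dx (Sc c al ga u) z)\<^sup>2) \<in> borel_measurable lborel" by simp
    have "dx u \<in> borel_measurable borel" using wu by (simp add: weak_dx_def L2fun_def)
    hence "Sc (c * al) al ga (dx u) \<in> borel_measurable borel" by (rule Sc_meas)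
    thus "(\<lambda>z. (Sc (c * al) al ga (dx u) z)\<^sup>2) \<in> borel_measurable lborel" by simp
  qed (use ae in auto)
  also have "\<dots> = L2sq (Sc (c * al) al ga (dx u))" by (simp add: L2sq_def)
  also have "\<dots> = (c * al)\<^sup>2 / (al * ga) * L2sq (dx u)"
    by (rule Sc_L2(2)[OF al ga]) (use wu in \<open>simp add: weak_dx_def\<close>)
  also have "\<dots> = c\<^sup>2 * al / ga * (\<integral>z. (dx u z)\<^sup>2 \<partial>lborel)"
    using al ga by (simp add: L2sq_def power2_eq_square field_simps)
  finally show "(\<integral>z. (dx (Sc c al ga u) z)\<^sup>2 \<partial>lborel) = c\<^sup>2 * al / ga * (\<integral>z. (dx u z)\<^sup>2 \<partial>lborel)" .
qed

lemma Sc_Lpp: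
  assumes al: "al > 0" and ga: "ga > 0" and c: "c > 0" and um[measurable]: "u \<in> borel_measurable borel"
  shows "Lpp p (Sc c al ga u) = c powr p / (al * ga) * Lpp p u"
proof -
  have fm[measurable]: "(\<lambda>z. c powr p * \<bar>u z\<bar> powr p) \<in> borel_measurable borel" by measurable
  have e: "(\<lambda>z. \<bar>Sc c al ga u z\<bar> powr p) = (\<lambda>z. (\<lambda>z. c powr p * \<bar>u z\<bar> powr p) (al * fst z, ga * snd z))"
    using c by (auto simp: Sc_def abs_mult powr_mult)
  show ?thesis unfolding Lpp_def e int2(1)[OF al ga fm] by simp
qed

lemma Sc_coup:
  assumes al: "al > 0" and ga: "ga > 0" and c1: "c1 > 0" and c2: "c2 > 0"
    and um[measurable]: "u \<in> borel_measurable borel" and vm[measurable]: "v \<in> borel_measurable borel"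
  shows "coup r1 r2 (Sc c1 al ga u) (Sc c2 al ga v) = c1 powr r1 * c2 powr r2 / (al * ga) * coup r1 r2 u v"
proof -
  have fm[measurable]: "(\<lambda>z. c1 powr r1 * c2 powr r2 * (\<bar>u z\<bar> powr r1 * \<bar>v z\<bar> powr r2)) \<in> borel_measurable borel" by measurable
  have e: "(\<lambda>z. \<bar>Sc c1 al ga u z\<bar> powr r1 * \<bar>Sc c2 al ga v z\<bar> powr r2) =
      (\<lambda>z. (\<lambda>z. c1 powr r1 * c2 powr r2 * (\<bar>u z\<bar> powr r1 * \<bar>v z\<bar> powr r2)) (al * fst z, ga * snd z))"
    using c1 c2 by (auto simp: Sc_def abs_mult powr_mult)
  show ?thesis unfolding coup_def e int2(1)[OF al ga fm] by simp
qed

lemma L2_AE_zero: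
  assumes "L2fun u" shows "(AE z in lborel. u z = 0) \<longleftrightarrow> L2sq u = 0"
proof -
  have i: "integrable lborel (\<lambda>z. (u z)\<^sup>2)" using assms by (simp add: L2fun_def)
  have "L2sq u = 0 \<longleftrightarrow> (AE z in lborel. (u z)\<^sup>2 = 0)"
    unfolding L2sq_def by (rule integral_nonneg_eq_0_iff_AE[OF i]) auto
  thus ?thesis by simp
qed

lemma L2sq_nonneg: "L2sq u \<ge> 0" unfolding L2sq_def by simp

lemma bern:
  fixes x m :: real
  assumes x: "x > 0" and m: "m \<ge> 1"
  shows "1 + m * (x - 1) \<le> x powr m"
proof -
  have d0: "\<And>y. y > 0 \<Longrightarrow> ((\<lambda>y. y powr m) has_real_derivative m * y powr (m - 1)) (at y)"
    by (auto intro!: derivative_eq_intros)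
  have d: "\<And>y. y > 0 \<Longrightarrow> ((\<lambda>y. y powr m) has_real_derivative m * (y powr m / y)) (at y)"
    using d0 by (simp add: powr_diff)
  consider "x = 1" | "x > 1" | "x < 1" by linarith
  thus ?thesis
  proof cases
    case 1 thus ?thesis by simp
  next
    case 2
    obtain z where z: "1 < z" "z < x" "x powr m - 1 powr m = (x - 1) * (m * (z powr m / z))"
      using MVT2[OF 2, of "\<lambda>y. y powr m" "\<lambda>y. m * (y powr m / y)"] d by force
    have "z powr m / z = z powr (m - 1)" using z by (simp add: powr_diff)
    moreover have "z powr (m - 1) \<ge> 1" using z m by (intro ge_one_powr_ge_zero) auto
    ultimately have "m * (z powr m / z) \<ge> m" using m by simp
    hence "(x - 1) * (m * (z powr m / z)) \<ge> (x - 1) * m" using 2 by (intro mult_left_mono) auto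
    thus ?thesis using z by (simp add: algebra_simps)
  next
    case 3
    obtain z where z: "x < z" "z < 1" "1 powr m - x powr m = (1 - x) * (m * (z powr m / z))"
      using MVT2[OF 3, of "\<lambda>y. y powr m" "\<lambda>y. m * (y powr m / y)"] d x by force
    have "z powr m / z = z powr (m - 1)" using z x by (simp add: powr_diff)
    moreover have "z powr (m - 1) \<le> 1" using z m x by (intro powr_le1) auto
    ultimately have "m * (z powr m / z) \<le> m" using m by (simp add: mult_left_le)
    hence "(1 - x) * (m * (z powr m / z)) \<le> (1 - x) * m" using 3 by (intro mult_left_mono) auto
    thus ?thesis using z by (simp add: algebra_simps)
  qed
qed

definition FF :: "real \<Rightarrow> real \<Rightarrow> real \<Rightarrow> real \<Rightarrow> real \<Rightarrow> real \<Rightarrow> real \<Rightarrow> real \<Rightarrow> real \<Rightarrow> real \<Rightarrow> real \<Rightarrow> real \<Rightarrow> real \<Rightarrow> real \<Rightarrow> real \<Rightarrow> real \<Rightarrow> real" where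
  "FF s p q r1 r2 mu1 mu2 beta k1 k2 L1 L2 C t1 t2 sg =
     sg powr (2 * s) * (t1\<^sup>2 * k1 + t2\<^sup>2 * k2) / 2
     - mu1 / p * t1 powr p * sg powr ((1 + s) * (p - 2) / 2) * L1
     - mu2 / q * t2 powr q * sg powr ((1 + s) * (q - 2) / 2) * L2
     - beta * t1 powr r1 * t2 powr r2 * sg powr ((1 + s) * (r1 + r2 - 2) / 2) * C"

definition GG :: "real \<Rightarrow> real \<Rightarrow> real \<Rightarrow> real \<Rightarrow> real \<Rightarrow> real \<Rightarrow> real \<Rightarrow> real \<Rightarrow> real \<Rightarrow> real \<Rightarrow> real \<Rightarrow> real \<Rightarrow> real \<Rightarrow> real \<Rightarrow> real \<Rightarrow> real \<Rightarrow> real" where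
  "GG s p q r1 r2 mu1 mu2 beta k1 k2 L1 L2 C t1 t2 sg =
     s * (sg powr (2 * s) * (t1\<^sup>2 * k1)) + s * (sg powr (2 * s) * (t2\<^sup>2 * k2))
     - (1 + s) * (p - 2) / (2 * p) * mu1 * (t1 powr p * sg powr ((1 + s) * (p - 2) / 2) * L1)
     - (1 + s) * (q - 2) / (2 * q) * mu2 * (t2 powr q * sg powr ((1 + s) * (q - 2) / 2) * L2)
     - (1 + s) * (r1 + r2 - 2) / 2 * beta * (t1 powr r1 * t2 powr r2 * sg powr ((1 + s) * (r1 + r2 - 2) / 2) * C)"

lemma FF_sym: "FF s p q r1 r2 mu1 mu2 beta k1 k2 L1 L2 C t1 t2 sg = FF s q p r2 r1 mu2 mu1 beta k2 k1 L2 L1 C t2 t1 sg"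
  unfolding FF_def by (simp add: algebra_simps)
lemma GG_sym: "GG s p q r1 r2 mu1 mu2 beta k1 k2 L1 L2 C t1 t2 sg = GG s q p r2 r1 mu2 mu1 beta k2 k1 L2 L1 C t2 t1 sg"
  unfolding GG_def by (simp add: algebra_simps)


lemma calc1:
  fixes s p q r1 r2 mu1 mu2 beta k1 k2 L1 L2 C A lam eps :: real
  assumes s: "0 < s"
    and ep: "2 * s < (1 + s) * (p - 2) / 2" and eq: "2 * s < (1 + s) * (q - 2) / 2"
    and er: "2 * s < (1 + s) * (r1 + r2 - 2) / 2"
    and pars: "mu1 > 0" "mu2 > 0" "beta > 0"
    and nn: "k1 \<ge> 0" "k2 \<ge> 0" "L1 \<ge> 0" "L2 \<ge> 0" "C \<ge> 0"
    and A: "A > 0" and lam: "lam > 0"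
    and P0: "GG s p q r1 r2 mu1 mu2 beta k1 k2 L1 L2 C 1 1 1 = 0"
    and E1: "k1 + lam * A = mu1 * L1 + beta * r1 * C"
    and eps: "eps > 0"
  shows "\<exists>t sg. 1 < t \<and> t < 1 + eps \<and> sg > 0 \<and> GG s p q r1 r2 mu1 mu2 beta k1 k2 L1 L2 C t 1 sg = 0
           \<and> FF s p q r1 r2 mu1 mu2 beta k1 k2 L1 L2 C t 1 sg < FF s p q r1 r2 mu1 mu2 beta k1 k2 L1 L2 C 1 1 1"
proof -
  define e1 where "e1 = (1 + s) * (p - 2) / 2"
  define e2 where "e2 = (1 + s) * (q - 2) / 2"
  define e3 where "e3 = (1 + s) * (r1 + r2 - 2) / 2"
  have e1p: "e1 > 2 * s" "e2 > 2 * s" "e3 > 2 * s" using ep eq er by (auto simp: e1_def e2_def e3_def)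
  have pp: "p > 2" proof (rule ccontr)
    assume "\<not> p > 2" hence "(1 + s) * (p - 2) \<le> 0" using s by (intro mult_nonneg_nonpos) auto
    thus False using ep s by linarith qed
  have qp: "q > 2" proof (rule ccontr)
    assume "\<not> q > 2" hence "(1 + s) * (q - 2) \<le> 0" using s by (intro mult_nonneg_nonpos) auto
    thus False using eq s by linarith qed
  define c1 where "c1 = mu1 / p * L1"
  define c2 where "c2 = mu2 / q * L2"
  define c3 where "c3 = beta * C"
  have cnn: "c1 \<ge> 0" "c2 \<ge> 0" "c3 \<ge> 0" using pars nn pp qp by (auto simp: c1_def c2_def c3_def)
  define F where "F t sg = FF s p q r1 r2 mu1 mu2 beta k1 k2 L1 L2 C t 1 sg" for t sg
  define G where "G t sg = GG s p q r1 r2 mu1 mu2 beta k1 k2 L1 L2 C t 1 sg" for t sg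
  have Fe: "F t sg = sg powr (2 * s) * (t\<^sup>2 * k1 + k2) / 2 - c1 * t powr p * sg powr e1
      - c2 * sg powr e2 - c3 * t powr r1 * sg powr e3" for t sg
    unfolding F_def FF_def c1_def c2_def c3_def e1_def e2_def e3_def using pp qp by (simp add: field_simps)
  have Ge: "G t sg = s * (sg powr (2 * s) * (t\<^sup>2 * k1)) + s * (sg powr (2 * s) * k2) - e1 * c1 * (t powr p * sg powr e1)
      - e2 * c2 * sg powr e2 - e3 * c3 * (t powr r1 * sg powr e3)" for t sg
    unfolding G_def GG_def c1_def c2_def c3_def e1_def e2_def e3_def using pp qp by (simp add: field_simps)
  have P0': "s * k1 + s * k2 = e1 * c1 + e2 * c2 + e3 * c3" using P0 Ge[of 1 1] unfolding G_def by simp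
  define S where "S = e1 * c1 + e2 * c2 + e3 * c3"
  have Spos: "S > 0"
  proof (rule ccontr)
    assume "\<not> S > 0"
    moreover have "e1 * c1 \<ge> 0" "e2 * c2 \<ge> 0" "e3 * c3 \<ge> 0" using cnn e1p s by auto
    ultimately have z: "e1 * c1 = 0" "e2 * c2 = 0" "e3 * c3 = 0" unfolding S_def by linarith+
    hence "c1 = 0" "c3 = 0" using e1p s by auto
    hence "L1 = 0" "C = 0" using pars pp by (auto simp: c1_def c3_def)
    moreover have "s * k1 + s * k2 = 0" using P0' z by simp
    moreover have "s * k1 \<ge> 0" "s * k2 \<ge> 0" using s nn by auto
    ultimately have "s * k1 = 0" by linarith
    hence "k1 = 0" using s by simp
    hence "lam * A = 0" using E1 \<open>L1 = 0\<close> \<open>C = 0\<close> by simp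
    thus False using lam A by simp
  qed
  have G1pos: "G 1 sg > 0" if "0 < sg" "sg < 1" for sg
  proof -
    have d: "sg powr (2 * s) - sg powr e1 > 0" "sg powr (2 * s) - sg powr e2 > 0" "sg powr (2 * s) - sg powr e3 > 0"
      using powr_less_mono'[OF that] e1p by auto
    define m where "m = min (sg powr (2 * s) - sg powr e1) (min (sg powr (2 * s) - sg powr e2) (sg powr (2 * s) - sg powr e3))"
    have m: "m > 0" using d by (simp add: m_def)
    have "G 1 sg = sg powr (2 * s) * (s * k1 + s * k2) - e1 * c1 * sg powr e1 - e2 * c2 * sg powr e2 - e3 * c3 * sg powr e3"
      unfolding Ge by (simp add: algebra_simps)
    also have "\<dots> = sg powr (2 * s) * (e1 * c1 + e2 * c2 + e3 * c3) - e1 * c1 * sg powr e1 - e2 * c2 * sg powr e2 - e3 * c3 * sg powr e3"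
      by (simp only: P0')
    also have "\<dots> = e1 * c1 * (sg powr (2 * s) - sg powr e1) + e2 * c2 * (sg powr (2 * s) - sg powr e2)
        + e3 * c3 * (sg powr (2 * s) - sg powr e3)" by (simp add: algebra_simps)
    finally have "G 1 sg = e1 * c1 * (sg powr (2 * s) - sg powr e1) + e2 * c2 * (sg powr (2 * s) - sg powr e2)
        + e3 * c3 * (sg powr (2 * s) - sg powr e3)" .
    also have "\<dots> \<ge> e1 * c1 * m + e2 * c2 * m + e3 * c3 * m"
      using cnn e1p s by (intro add_mono mult_left_mono) (auto simp: m_def)
    finally have "G 1 sg \<ge> S * m" unfolding S_def by (simp add: algebra_simps)
    moreover have "S * m > 0" using Spos m by simp
    ultimately show ?thesis by linarith
  qed
  have G1neg: "G 1 sg < 0" if "1 < sg" for sg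
  proof -
    have d: "sg powr e1 - sg powr (2 * s) > 0" "sg powr e2 - sg powr (2 * s) > 0" "sg powr e3 - sg powr (2 * s) > 0"
      using powr_less_mono[OF _ that] e1p by auto
    define m where "m = min (sg powr e1 - sg powr (2 * s)) (min (sg powr e2 - sg powr (2 * s)) (sg powr e3 - sg powr (2 * s)))"
    have m: "m > 0" using d by (simp add: m_def)
    have "G 1 sg = sg powr (2 * s) * (s * k1 + s * k2) - e1 * c1 * sg powr e1 - e2 * c2 * sg powr e2 - e3 * c3 * sg powr e3"
      unfolding Ge by (simp add: algebra_simps)
    also have "\<dots> = sg powr (2 * s) * (e1 * c1 + e2 * c2 + e3 * c3) - e1 * c1 * sg powr e1 - e2 * c2 * sg powr e2 - e3 * c3 * sg powr e3"
      by (simp only: P0')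
    finally have "- G 1 sg = e1 * c1 * (sg powr e1 - sg powr (2 * s)) + e2 * c2 * (sg powr e2 - sg powr (2 * s))
        + e3 * c3 * (sg powr e3 - sg powr (2 * s))" by (simp add: algebra_simps)
    also have "\<dots> \<ge> e1 * c1 * m + e2 * c2 * m + e3 * c3 * m"
      using cnn e1p s by (intro add_mono mult_left_mono) (auto simp: m_def)
    finally have "- G 1 sg \<ge> S * m" unfolding S_def by (simp add: algebra_simps)
    moreover have "S * m > 0" using Spos m by simp
    ultimately show ?thesis by linarith
  qed
  have F1max: "F 1 sg \<le> F 1 1" if sg: "sg > 0" for sg
  proof -
    define x where "x = sg powr (2 * s)"
    have x: "x > 0" using sg by (simp add: x_def)
    define m1 where "m1 = e1 / (2 * s)"
    define m2 where "m2 = e2 / (2 * s)"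
    define m3 where "m3 = e3 / (2 * s)"
    have m: "m1 \<ge> 1" "m2 \<ge> 1" "m3 \<ge> 1" using e1p s by (auto simp: m1_def m2_def m3_def field_simps)
    have xp: "sg powr e1 = x powr m1" "sg powr e2 = x powr m2" "sg powr e3 = x powr m3"
      using s by (auto simp: x_def m1_def m2_def m3_def powr_powr)
    have K2: "(k1 + k2) / 2 = c1 * m1 + c2 * m2 + c3 * m3"
      using P0' s unfolding m1_def m2_def m3_def by (simp add: field_simps)
    have b1: "c1 * (1 + m1 * (x - 1)) \<le> c1 * x powr m1" using bern[OF x m(1)] cnn by (intro mult_left_mono)
    have b2: "c2 * (1 + m2 * (x - 1)) \<le> c2 * x powr m2" using bern[OF x m(2)] cnn by (intro mult_left_mono)
    have b3: "c3 * (1 + m3 * (x - 1)) \<le> c3 * x powr m3" using bern[OF x m(3)] cnn by (intro mult_left_mono)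
    have F1: "F 1 sg = x * ((k1 + k2) / 2) - c1 * x powr m1 - c2 * x powr m2 - c3 * x powr m3"
      unfolding Fe xp by (simp add: x_def)
    have F11: "F 1 1 = (k1 + k2) / 2 - c1 - c2 - c3" unfolding Fe by simp
    have "F 1 1 - F 1 sg = (c1 * x powr m1 - c1 * (1 + m1 * (x - 1))) + (c2 * x powr m2 - c2 * (1 + m2 * (x - 1)))
       + (c3 * x powr m3 - c3 * (1 + m3 * (x - 1)))"
      unfolding F1 F11 K2 by (simp add: algebra_simps)
    thus ?thesis using b1 b2 b3 by linarith
  qed
  define D where "D t sg = t * sg powr (2 * s) * k1 - c1 * p * (t powr p / t) * sg powr e1 - c3 * r1 * (t powr r1 / t) * sg powr e3" for t sg
  have hD: "((\<lambda>t. F t sg) has_real_derivative D t sg) (at t)" if t: "t > 0" for t sg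
  proof -
    have "((\<lambda>t. sg powr (2 * s) * (t\<^sup>2 * k1 + k2) / 2 - c1 * t powr p * sg powr e1
      - c2 * sg powr e2 - c3 * t powr r1 * sg powr e3) has_real_derivative D t sg) (at t)"
      using t by (auto intro!: derivative_eq_intros simp: D_def powr_diff field_simps power2_eq_square)
    thus ?thesis unfolding Fe .
  qed
  have D11: "D 1 1 < 0"
  proof -
    have "D 1 1 = k1 - mu1 * L1 - beta * r1 * C" unfolding D_def c1_def c3_def using pp by simp
    also have "\<dots> = - (lam * A)" using E1 by simp
    finally show ?thesis using lam A by simp
  qed
  have "((\<lambda>z. D (fst z) (snd z)) \<longlongrightarrow> D (fst (1::real, 1::real)) (snd (1::real, 1::real))) (at (1, 1))"
    unfolding D_def by (intro tendsto_intros) auto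
  hence "\<forall>\<^sub>F z in at (1::real, 1::real). D (fst z) (snd z) < 0" using D11 by (intro order_tendstoD(2)) auto
  then obtain dl where dl: "dl > 0" "\<And>z. z \<noteq> (1, 1) \<Longrightarrow> dist z (1, 1) < dl \<Longrightarrow> D (fst z) (snd z) < 0"
    unfolding eventually_at by blast
  have Dneg: "D t sg < 0" if "\<bar>t - 1\<bar> < dl / 2" "\<bar>sg - 1\<bar> < dl / 2" for t sg
  proof (cases "(t, sg) = (1, 1)")
    case True thus ?thesis using D11 by simp
  next
    case False
    have "dist (t, sg) (1, 1) = sqrt ((dist t 1)\<^sup>2 + (dist sg 1)\<^sup>2)" by (simp add: dist_Pair_Pair)
    also have "\<dots> \<le> \<bar>dist t 1\<bar> + \<bar>dist sg 1\<bar>" by (rule sqrt_sum_squares_le_sum_abs)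
    also have "\<dots> < dl" using that by (simp add: dist_real_def)
    finally show ?thesis using dl(2)[OF False] by simp
  qed
  define et where "et = min (1/2) (dl / 4)"
  have et: "et > 0" "et \<le> 1/2" "et < dl / 2" using dl by (auto simp: et_def)
  have s1: "G 1 (1 - et) > 0" using et by (intro G1pos) auto
  have s2: "G 1 (1 + et) < 0" using et by (intro G1neg) auto
  have "((\<lambda>t. G t (1 - et)) \<longlongrightarrow> G 1 (1 - et)) (at 1)" unfolding Ge by (intro tendsto_intros) auto
  hence ev1: "\<forall>\<^sub>F t in at 1. G t (1 - et) > 0" using s1 by (intro order_tendstoD(1)) auto
  have "((\<lambda>t. G t (1 + et)) \<longlongrightarrow> G 1 (1 + et)) (at 1)" unfolding Ge by (intro tendsto_intros) auto
  hence ev2: "\<forall>\<^sub>F t in at 1. G t (1 + et) < 0" using s2 by (intro order_tendstoD(2)) auto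
  have "\<forall>\<^sub>F t in at (1::real). G t (1 - et) > 0 \<and> G t (1 + et) < 0" using ev1 ev2 by eventually_elim auto
  then obtain d2 where d2: "d2 > 0" "\<And>t. t \<noteq> 1 \<Longrightarrow> dist t 1 < d2 \<Longrightarrow> G t (1 - et) > 0 \<and> G t (1 + et) < 0"
    unfolding eventually_at by blast
  define t where "t = 1 + min eps (min et d2) / 2"
  have t: "1 < t" "t < 1 + eps" "t - 1 < et" "t - 1 < d2" using eps et d2 by (auto simp: t_def)
  have Gs: "G t (1 - et) > 0" "G t (1 + et) < 0" using d2(2)[of t] t by (auto simp: dist_real_def)
  have cont: "continuous_on {1 - et .. 1 + et} (G t)"
  proof -
    have "continuous_on {1 - et .. 1 + et} (\<lambda>sg. s * (sg powr (2 * s) * (t\<^sup>2 * k1)) + s * (sg powr (2 * s) * k2) - e1 * c1 * (t powr p * sg powr e1)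
      - e2 * c2 * sg powr e2 - e3 * c3 * (t powr r1 * sg powr e3))"
      using et by (intro continuous_intros) auto
    thus ?thesis unfolding Ge[abs_def] .
  qed
  obtain sg where sg: "1 - et \<le> sg" "sg \<le> 1 + et" "G t sg = 0"
    using IVT2'[of "G t" "1 + et" 0 "1 - et", OF _ _ _ cont] Gs et by auto
  have sgp: "sg > 0" using sg et by auto
  obtain z where z: "1 < z" "z < t" "F t sg - F 1 sg = (t - 1) * D z sg"
    using MVT2[OF t(1), of "\<lambda>x. F x sg" "\<lambda>x. D x sg"] hD by force
  have a1: "\<bar>sg - 1\<bar> \<le> et" using sg by (simp add: abs_le_iff)
  have a2: "\<bar>z - 1\<bar> < et" using z t by (simp add: abs_less_iff)
  have "D z sg < 0" using a1 a2 et by (intro Dneg) linarith+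
  hence "(t - 1) * D z sg < 0" using t by (intro mult_pos_neg) auto
  hence "F t sg < F 1 sg" using z by linarith
  also have "\<dots> \<le> F 1 1" by (rule F1max[OF sgp])
  finally have "F t sg < F 1 1" .
  thus ?thesis using t sg sgp unfolding F_def G_def by blast
qed

definition W :: "real \<Rightarrow> real \<Rightarrow> real \<Rightarrow> (real\<times>real \<Rightarrow> real) \<Rightarrow> (real\<times>real \<Rightarrow> real)" where
  "W s t sg u = Sc (t * sg powr ((1 + s) / 2)) (sg powr s) sg u"

lemma pw_c2:
  fixes t sg s :: real
  assumes "t > 0" "sg > 0"
  shows "(t * sg powr ((1 + s) / 2))\<^sup>2 = t\<^sup>2 * sg powr (1 + s)"
proof -
  have "(sg powr ((1 + s) / 2))\<^sup>2 = sg powr ((1 + s) / 2) * sg powr ((1 + s) / 2)" by (simp add: power2_eq_square)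
  also have "\<dots> = sg powr (1 + s)" by (simp add: powr_add[symmetric])
  finally show ?thesis by (simp add: power_mult_distrib)
qed

lemma W_props:
  assumes u: "u \<in> H1s s" and t: "t > 0" and sg: "sg > 0"
  shows "W s t sg u \<in> H1s s"
    and "L2sq (W s t sg u) = t\<^sup>2 * L2sq u"
    and "Kfun s (W s t sg u) = t\<^sup>2 * sg powr (2 * s) * Kfun s u"
    and "Lpp p (W s t sg u) = t powr p * sg powr ((1 + s) * (p - 2) / 2) * Lpp p u"
proof -
  define c where "c = t * sg powr ((1 + s) / 2)"
  have al: "sg powr s > 0" using sg by simp
  have c: "c > 0" using t sg by (simp add: c_def)
  have c2: "c\<^sup>2 = t\<^sup>2 * sg powr (1 + s)" unfolding c_def by (rule pw_c2[OF t sg])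
  have uL: "L2fun u" using u by (simp add: H1s_def)
  have um: "u \<in> borel_measurable borel" using uL by (simp add: L2fun_def)
  show "W s t sg u \<in> H1s s" unfolding W_def using Sc_H1s(1)[OF al sg u] .
  have "L2sq (W s t sg u) = c\<^sup>2 / (sg powr s * sg) * L2sq u" unfolding W_def c_def[symmetric] by (rule Sc_L2(2)[OF al sg uL])
  also have "c\<^sup>2 / (sg powr s * sg) = t\<^sup>2"
  proof -
    have "sg powr s * sg = sg powr (1 + s)" using sg by (simp add: powr_add powr_one_gt_zero_iff mult.commute)
    thus ?thesis unfolding c2 using sg by simp
  qed
  finally show "L2sq (W s t sg u) = t\<^sup>2 * L2sq u" .
  have pa: "sg powr (1 + s) = sg * sg powr s" using sg by (simp add: powr_add)
  have pb0: "sg powr (2 * s) = sg powr s * sg powr s" by (subst mult_2) (rule powr_add)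
  note pb = pb0[symmetric]
  have "sg powr (1 + 2 * s) = sg powr 1 * sg powr (2 * s)" by (rule powr_add)
  hence pc: "sg powr (1 + 2 * s) = sg * (sg powr s * sg powr s)" using sg by (simp only: pb powr_one_gt_zero_iff) simp
  have k1: "c\<^sup>2 * sg powr s / sg = t\<^sup>2 * sg powr (2 * s)"
    unfolding c2 pa pb[symmetric] using sg by simp
  have k2: "c\<^sup>2 * sg powr (1 + 2 * s) / (sg powr s * sg * sg) = t\<^sup>2 * sg powr (2 * s)"
    unfolding c2 pa pc pb[symmetric] using sg by (simp add: field_simps)
  show "Kfun s (W s t sg u) = t\<^sup>2 * sg powr (2 * s) * Kfun s u"
    unfolding Kfun_def W_def c_def[symmetric] Sc_H1s(2)[OF al sg u] Sc_gag(3)[OF al sg u] k1 k2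
    by (simp add: algebra_simps)
  have "Lpp p (W s t sg u) = c powr p / (sg powr s * sg) * Lpp p u"
    unfolding W_def c_def[symmetric] by (rule Sc_Lpp[OF al sg c um])
  also have "c powr p / (sg powr s * sg) = t powr p * sg powr ((1 + s) * (p - 2) / 2)"
  proof -
    have "c powr p = t powr p * sg powr ((1 + s) / 2 * p)" unfolding c_def using t sg by (simp add: powr_mult powr_powr)
    moreover have "sg powr ((1 + s) / 2 * p) / (sg powr s * sg) = sg powr ((1 + s) / 2 * p - s - 1)"
      using sg by (simp add: powr_diff powr_add[symmetric])
    moreover have "(1 + s) / 2 * p - s - 1 = (1 + s) * (p - 2) / 2" by (simp add: field_simps)
    ultimately have e2: "sg powr ((1 + s) / 2 * p) / (sg powr s * sg) = sg powr ((1 + s) * (p - 2) / 2)" by (simp only:)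
    have "c powr p / (sg powr s * sg) = t powr p * (sg powr ((1 + s) / 2 * p) / (sg powr s * sg))"
      using \<open>c powr p = _\<close> by simp
    thus ?thesis unfolding e2 .
  qed
  finally show "Lpp p (W s t sg u) = t powr p * sg powr ((1 + s) * (p - 2) / 2) * Lpp p u" .
qed

lemma W_coup:
  assumes u: "u \<in> H1s s" and v: "v \<in> H1s s" and t1: "t1 > 0" and t2: "t2 > 0" and sg: "sg > 0"
  shows "coup r1 r2 (W s t1 sg u) (W s t2 sg v) = t1 powr r1 * t2 powr r2 * sg powr ((1 + s) * (r1 + r2 - 2) / 2) * coup r1 r2 u v"
proof -
  have al: "sg powr s > 0" using sg by simp
  have um: "u \<in> borel_measurable borel" "v \<in> borel_measurable borel" using u v by (auto simp: H1s_def L2fun_def)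
  have c: "t1 * sg powr ((1 + s) / 2) > 0" "t2 * sg powr ((1 + s) / 2) > 0" using t1 t2 sg by auto
  have "coup r1 r2 (W s t1 sg u) (W s t2 sg v) = (t1 * sg powr ((1 + s) / 2)) powr r1 * (t2 * sg powr ((1 + s) / 2)) powr r2 / (sg powr s * sg) * coup r1 r2 u v"
    unfolding W_def by (rule Sc_coup[OF al sg c um])
  also have "(t1 * sg powr ((1 + s) / 2)) powr r1 * (t2 * sg powr ((1 + s) / 2)) powr r2 / (sg powr s * sg) =
     t1 powr r1 * t2 powr r2 * sg powr ((1 + s) * (r1 + r2 - 2) / 2)"
  proof -
    have "(t1 * sg powr ((1 + s) / 2)) powr r1 * (t2 * sg powr ((1 + s) / 2)) powr r2 =
        t1 powr r1 * t2 powr r2 * (sg powr ((1 + s) / 2 * r1) * sg powr ((1 + s) / 2 * r2))"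
      using t1 t2 sg by (simp add: powr_mult powr_powr)
    also have "sg powr ((1 + s) / 2 * r1) * sg powr ((1 + s) / 2 * r2) = sg powr ((1 + s) / 2 * r1 + (1 + s) / 2 * r2)"
      by (simp add: powr_add)
    finally have e: "(t1 * sg powr ((1 + s) / 2)) powr r1 * (t2 * sg powr ((1 + s) / 2)) powr r2 =
        t1 powr r1 * t2 powr r2 * sg powr ((1 + s) / 2 * r1 + (1 + s) / 2 * r2)" .
    have "sg powr ((1 + s) / 2 * r1 + (1 + s) / 2 * r2) / (sg powr s * sg) = sg powr ((1 + s) / 2 * r1 + (1 + s) / 2 * r2 - s - 1)"
      using sg by (simp add: powr_diff powr_add[symmetric])
    moreover have x: "(1 + s) / 2 * r1 + (1 + s) / 2 * r2 - s - 1 = (1 + s) * (r1 + r2 - 2) / 2" by (simp add: field_simps)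
    ultimately have e2: "sg powr ((1 + s) / 2 * r1 + (1 + s) / 2 * r2) / (sg powr s * sg) = sg powr ((1 + s) * (r1 + r2 - 2) / 2)"
      by (simp only:)
    have "t1 powr r1 * t2 powr r2 * sg powr ((1 + s) / 2 * r1 + (1 + s) / 2 * r2) / (sg powr s * sg) =
      t1 powr r1 * t2 powr r2 * (sg powr ((1 + s) / 2 * r1 + (1 + s) / 2 * r2) / (sg powr s * sg))" by simp
    thus ?thesis unfolding e e2 .
  qed
  finally show ?thesis .
qed

lemma W_JP:
  assumes u: "u \<in> H1s s" and v: "v \<in> H1s s" and t1: "t1 > 0" and t2: "t2 > 0" and sg: "sg > 0"
  shows "Jfun s p q r1 r2 mu1 mu2 beta (W s t1 sg u) (W s t2 sg v) =
           FF s p q r1 r2 mu1 mu2 beta (Kfun s u) (Kfun s v) (Lpp p u) (Lpp q v) (coup r1 r2 u v) t1 t2 sg"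
    and "Pfun s p q r1 r2 mu1 mu2 beta (W s t1 sg u) (W s t2 sg v) =
           GG s p q r1 r2 mu1 mu2 beta (Kfun s u) (Kfun s v) (Lpp p u) (Lpp q v) (coup r1 r2 u v) t1 t2 sg"
  unfolding Jfun_def Pfun_def FF_def GG_def W_props(3,4)[OF u t1 sg] W_props(3,4)[OF v t2 sg] W_coup[OF u v t1 t2 sg]
  by (simp_all add: algebra_simps)

lemma Cfrac_pos: "0 < s \<Longrightarrow> s < 1 \<Longrightarrow> Cfrac s > 0"
  unfolding Cfrac_def by (intro divide_pos_pos mult_pos_pos Gamma_real_pos) auto

lemma gag_nonneg: "gag s u u t \<ge> 0"
  by (cases t) (auto simp: gag_def)

lemma Kfun_nonneg: "0 < s \<Longrightarrow> s < 1 \<Longrightarrow> Kfun s u \<ge> 0"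
proof -
  assume "0 < s" "s < 1"
  hence c: "Cfrac s > 0" by (rule Cfrac_pos)
  have i: "integral\<^sup>L lborel (gag s u u) \<ge> 0" by (rule Bochner_Integration.integral_nonneg) (rule gag_nonneg)
  have j: "(\<integral>z. (dx u z)\<^sup>2 \<partial>lborel) \<ge> 0" by (rule Bochner_Integration.integral_nonneg) simp
  show ?thesis unfolding Kfun_def Efrac_def using c i j by simp
qed

lemma Lpp_nonneg: "Lpp p u \<ge> 0" unfolding Lpp_def by (rule Bochner_Integration.integral_nonneg) simp
lemma coup_nonneg: "coup r1 r2 u v \<ge> 0" unfolding coup_def by (rule Bochner_Integration.integral_nonneg) simp

lemma powr_sq: "\<bar>x::real\<bar> powr (p - 2) * x * x = \<bar>x\<bar> powr p"
proof (cases "x = 0")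
  case False
  have "\<bar>x\<bar> powr (p - 2 + 2) = \<bar>x\<bar> powr (p - 2) * \<bar>x\<bar> powr 2" by (rule powr_add)
  hence "\<bar>x\<bar> powr p = \<bar>x\<bar> powr (p - 2) * \<bar>x\<bar> powr 2" by simp
  also have "\<bar>x\<bar> powr 2 = x * x"
  proof -
    have "\<bar>x\<bar> powr (real 2) = \<bar>x\<bar> ^ 2" using False by (intro powr_realpow) simp
    thus ?thesis by (simp add: power2_eq_square abs_mult_self_eq)
  qed
  finally show ?thesis by simp
qed simp

lemma J_nonneg:
  assumes s: "0 < s" "s < 1"
    and hpar: "mu1 > 0" "mu2 > 0" "beta > 0"
    and hp: "2 * (1 + 3 * s) / (1 + s) < p" and hq: "2 * (1 + 3 * s) / (1 + s) < q"
    and hr: "2 * (1 + 3 * s) / (1 + s) < r1 + r2"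
    and P: "Pfun s p q r1 r2 mu1 mu2 beta u v = 0"
  shows "Jfun s p q r1 r2 mu1 mu2 beta u v \<ge> 0"
proof -
  have ep: "(1 + s) * (p - 2) > 4 * s" "(1 + s) * (q - 2) > 4 * s" "(1 + s) * (r1 + r2 - 2) > 4 * s"
    using hp hq hr s by (simp_all add: field_simps)
  have pp: "p > 0" "q > 0" using ep s by (smt (verit) mult_nonneg_nonpos)+
  define a1 where "a1 = ((1 + s) * (p - 2) - 4 * s) / (4 * s * p)"
  define a2 where "a2 = ((1 + s) * (q - 2) - 4 * s) / (4 * s * q)"
  define a3 where "a3 = ((1 + s) * (r1 + r2 - 2) - 4 * s) / (4 * s)"
  have a: "a1 \<ge> 0" "a2 \<ge> 0" "a3 \<ge> 0" using ep s pp by (auto simp: a1_def a2_def a3_def)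
  have "Jfun s p q r1 r2 mu1 mu2 beta u v = Jfun s p q r1 r2 mu1 mu2 beta u v - Pfun s p q r1 r2 mu1 mu2 beta u v / (2 * s)"
    using P by simp
  also have "\<dots> = a1 * mu1 * Lpp p u + a2 * mu2 * Lpp q v + a3 * beta * coup r1 r2 u v"
    unfolding Jfun_def Pfun_def a1_def a2_def a3_def using s pp by (simp add: field_simps)
  also have "\<dots> \<ge> 0" using a hpar Lpp_nonneg[of p u] Lpp_nonneg[of q v] coup_nonneg[of r1 r2 u v]
    by (intro add_nonneg_nonneg mult_nonneg_nonneg) auto
  finally show ?thesis .
qed

lemma coup_swap: "coup r1 r2 u v = coup r2 r1 v u"
  unfolding coup_def by (simp add: mult.commute)

lemma Jfun_swap: "Jfun s p q r1 r2 mu1 mu2 beta u v = Jfun s q p r2 r1 mu2 mu1 beta v u"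
  unfolding Jfun_def coup_swap[of r1 r2 u v] by (simp add: algebra_simps)

lemma Pfun_swap: "Pfun s p q r1 r2 mu1 mu2 beta u v = Pfun s q p r2 r1 mu2 mu1 beta v u"
  unfolding Pfun_def coup_swap[of r1 r2 u v] by (simp add: algebra_simps)

lemma W_one: "W s 1 1 u = u" by (simp add: W_def Sc_def)

lemma part1:
  fixes s p q r1 r2 mu1 mu2 beta a b lam :: real and u v :: "real \<times> real \<Rightarrow> real"
  assumes s: "1/2 < s" "s < 1" and hpar: "mu1 > 0" "mu2 > 0" "beta > 0"
    and hp: "2 * (1 + 3 * s) / (1 + s) < p" and hq: "2 * (1 + 3 * s) / (1 + s) < q"
    and hr: "2 * (1 + 3 * s) / (1 + s) < r1 + r2"
    and u: "u \<in> H1s s" and v: "v \<in> H1s s"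
    and La: "L2sq u \<le> a" and Lb: "L2sq v \<le> b"
    and nz: "\<not> (AE z in lborel. u z = 0)"
    and P: "Pfun s p q r1 r2 mu1 mu2 beta u v = 0"
    and min: "\<And>w1 w2. w1 \<in> H1s s \<Longrightarrow> w2 \<in> H1s s \<Longrightarrow> Pfun s p q r1 r2 mu1 mu2 beta w1 w2 = 0 \<Longrightarrow>
        L2sq w1 \<le> a \<Longrightarrow> L2sq w2 \<le> b \<Longrightarrow> \<not> (AE z in lborel. w1 z = 0) \<Longrightarrow>
        Jfun s p q r1 r2 mu1 mu2 beta u v \<le> Jfun s p q r1 r2 mu1 mu2 beta w1 w2"
    and E1: "Kfun s u + lam * L2sq u = mu1 * Lpp p u + beta * r1 * coup r1 r2 u v"
    and lam: "lam > 0"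
  shows "L2sq u = a"
proof (rule ccontr)
  assume ne: "L2sq u \<noteq> a"
  hence lt: "L2sq u < a" using La by simp
  define A where "A = L2sq u"
  have uL: "L2fun u" using u by (simp add: H1s_def)
  have A: "A > 0" using L2_AE_zero[OF uL] nz L2sq_nonneg[of u] unfolding A_def by auto
  have s0: "0 < s" using s by simp
  have ep: "2 * s < (1 + s) * (p - 2) / 2" "2 * s < (1 + s) * (q - 2) / 2" "2 * s < (1 + s) * (r1 + r2 - 2) / 2"
    using hp hq hr s by (simp_all add: field_simps)
  define eps where "eps = min 1 ((a - A) / (3 * A))"
  have eps12: "eps > 0" "eps \<le> 1" using A lt unfolding eps_def A_def[symmetric]
    by (auto simp: field_simps)
  have "eps \<le> (a - A) / (3 * A)" unfolding eps_def by simp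
  hence "3 * A * eps \<le> 3 * A * ((a - A) / (3 * A))" using A by (intro mult_left_mono) auto
  hence "3 * A * eps \<le> a - A" using A by simp
  note eps = eps12 this
  let ?k1 = "Kfun s u" and ?k2 = "Kfun s v" and ?L1 = "Lpp p u" and ?L2 = "Lpp q v" and ?C = "coup r1 r2 u v"
  have G11: "GG s p q r1 r2 mu1 mu2 beta ?k1 ?k2 ?L1 ?L2 ?C 1 1 1 = Pfun s p q r1 r2 mu1 mu2 beta u v"
    by (simp add: GG_def Pfun_def)
  have F11: "FF s p q r1 r2 mu1 mu2 beta ?k1 ?k2 ?L1 ?L2 ?C 1 1 1 = Jfun s p q r1 r2 mu1 mu2 beta u v"
    by (simp add: FF_def Jfun_def)
  have ex: "\<exists>t sg. 1 < t \<and> t < 1 + eps \<and> sg > 0 \<and> GG s p q r1 r2 mu1 mu2 beta ?k1 ?k2 ?L1 ?L2 ?C t 1 sg = 0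
      \<and> FF s p q r1 r2 mu1 mu2 beta ?k1 ?k2 ?L1 ?L2 ?C t 1 sg < FF s p q r1 r2 mu1 mu2 beta ?k1 ?k2 ?L1 ?L2 ?C 1 1 1"
    by (rule calc1[OF s0 ep hpar])
       (use Kfun_nonneg[OF s0 s(2)] Lpp_nonneg coup_nonneg A lam G11 P E1 eps(1) in \<open>auto simp: A_def\<close>)
  then obtain t sg where t: "1 < t" "t < 1 + eps" and sg: "sg > 0"
    and G: "GG s p q r1 r2 mu1 mu2 beta ?k1 ?k2 ?L1 ?L2 ?C t 1 sg = 0"
    and F: "FF s p q r1 r2 mu1 mu2 beta ?k1 ?k2 ?L1 ?L2 ?C t 1 sg < FF s p q r1 r2 mu1 mu2 beta ?k1 ?k2 ?L1 ?L2 ?C 1 1 1"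
    by blast
  define w1 where "w1 = W s t sg u"
  define w2 where "w2 = W s 1 sg v"
  have t0: "t > 0" using t by simp
  have w1: "w1 \<in> H1s s" unfolding w1_def by (rule W_props(1)[OF u t0 sg])
  have w2: "w2 \<in> H1s s" unfolding w2_def by (rule W_props(1)[OF v _ sg]) simp
  have one: "(1::real) > 0" by simp
  have Pw: "Pfun s p q r1 r2 mu1 mu2 beta w1 w2 = 0" unfolding w1_def w2_def W_JP(2)[OF u v t0 one sg] using G .
  have L1: "L2sq w1 = t\<^sup>2 * A" unfolding w1_def A_def by (rule W_props(2)[OF u t0 sg])
  have "t\<^sup>2 \<le> (1 + eps)\<^sup>2" using t by (intro power_mono) auto
  also have "\<dots> \<le> 1 + 3 * eps"
  proof -
    have "eps * eps \<le> 1 * eps" using eps by (intro mult_right_mono) auto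
    thus ?thesis by (simp add: power2_eq_square algebra_simps)
  qed
  finally have "t\<^sup>2 * A \<le> (1 + 3 * eps) * A" using A by (intro mult_right_mono) auto
  hence La1: "L2sq w1 \<le> a" using eps(3) L1 by (simp add: algebra_simps)
  have Lb1: "L2sq w2 \<le> b" unfolding w2_def using W_props(2)[OF v _ sg, of 1] Lb by simp
  have w1L: "L2fun w1" using w1 by (simp add: H1s_def)
  have "L2sq w1 > 0" using L1 A t by simp
  hence nz1: "\<not> (AE z in lborel. w1 z = 0)" using L2_AE_zero[OF w1L] by simp
  have "Jfun s p q r1 r2 mu1 mu2 beta u v \<le> Jfun s p q r1 r2 mu1 mu2 beta w1 w2"
    by (rule min[OF w1 w2 Pw La1 Lb1 nz1])
  also have "\<dots> = FF s p q r1 r2 mu1 mu2 beta ?k1 ?k2 ?L1 ?L2 ?C t 1 sg"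
    unfolding w1_def w2_def by (rule W_JP(1)[OF u v t0 one sg])
  also have "\<dots> < Jfun s p q r1 r2 mu1 mu2 beta u v" using F F11 by simp
  finally show False by simp
qed

theorem lemma5p2:
  fixes s mu1 mu2 beta r1 r2 p q a b lam1 lam2 :: real
    and u v :: "real \<times> real \<Rightarrow> real"
  assumes hs: "1/2 < s" "s < 1"
    and hpar: "mu1 > 0" "mu2 > 0" "beta > 0" "r1 > 1" "r2 > 1"
    and hp: "2 * (1 + 3 * s) / (1 + s) < p" "p < 2 * (1 + s) / (1 - s)"
    and hq: "2 * (1 + 3 * s) / (1 + s) < q" "q < 2 * (1 + s) / (1 - s)"
    and hr: "2 * (1 + 3 * s) / (1 + s) < r1 + r2" "r1 + r2 < 2 * (1 + s) / (1 - s)"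
    and hab: "a > 0" "b > 0"
    and hP: "(u, v) \<in> Pset_ab s p q r1 r2 mu1 mu2 beta a b"
    and hpos: "AE z in lborel. u z \<ge> 0" "AE z in lborel. v z \<ge> 0"
    and hnz: "\<not> (AE z in lborel. u z = 0)" "\<not> (AE z in lborel. v z = 0)"
    and hmin: "Jfun s p q r1 r2 mu1 mu2 beta u v = Cab s p q r1 r2 mu1 mu2 beta a b"
    and eq1: "\<forall>phi \<in> H1s s.
       (\<integral>z. dx u z * dx phi z \<partial>lborel) + Efrac s u phi + lam1 * (\<integral>z. u z * phi z \<partial>lborel)
       = mu1 * (\<integral>z. \<bar>u z\<bar> powr (p - 2) * u z * phi z \<partial>lborel)
         + beta * r1 * (\<integral>z. \<bar>u z\<bar> powr (r1 - 2) * u z * \<bar>v z\<bar> powr r2 * phi z \<partial>lborel)"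
    and eq2: "\<forall>phi \<in> H1s s.
       (\<integral>z. dx v z * dx phi z \<partial>lborel) + Efrac s v phi + lam2 * (\<integral>z. v z * phi z \<partial>lborel)
       = mu2 * (\<integral>z. \<bar>v z\<bar> powr (q - 2) * v z * phi z \<partial>lborel)
         + beta * r2 * (\<integral>z. \<bar>u z\<bar> powr r1 * \<bar>v z\<bar> powr (r2 - 2) * v z * phi z \<partial>lborel)"
  shows "(lam1 > 0 \<longrightarrow> L2sq u = a) \<and> (lam2 > 0 \<longrightarrow> L2sq v = b)"
proof -
  have u: "u \<in> H1s s" and v: "v \<in> H1s s" and P: "Pfun s p q r1 r2 mu1 mu2 beta u v = 0"
    and La: "L2sq u \<le> a" and Lb: "L2sq v \<le> b"
    using hP by (auto simp: Pset_ab_def)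
  have s0: "0 < s" using hs by simp
  have bdd: "bdd_below ((\<lambda>uv. Jfun s p q r1 r2 mu1 mu2 beta (fst uv) (snd uv)) ` Pset_ab s p q r1 r2 mu1 mu2 beta a b)"
  proof (rule bdd_belowI[of _ 0])
    fix x assume "x \<in> (\<lambda>uv. Jfun s p q r1 r2 mu1 mu2 beta (fst uv) (snd uv)) ` Pset_ab s p q r1 r2 mu1 mu2 beta a b"
    then obtain w1 w2 where "(w1, w2) \<in> Pset_ab s p q r1 r2 mu1 mu2 beta a b" "x = Jfun s p q r1 r2 mu1 mu2 beta w1 w2"
      by auto
    thus "0 \<le> x" using J_nonneg[OF s0 hs(2) hpar(1-3) hp(1) hq(1) hr(1)] by (auto simp: Pset_ab_def)
  qed
  have minP: "Jfun s p q r1 r2 mu1 mu2 beta u v \<le> Jfun s p q r1 r2 mu1 mu2 beta w1 w2"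
    if "(w1, w2) \<in> Pset_ab s p q r1 r2 mu1 mu2 beta a b" for w1 w2
  proof -
    have "Cab s p q r1 r2 mu1 mu2 beta a b \<le> Jfun s p q r1 r2 mu1 mu2 beta (fst (w1, w2)) (snd (w1, w2))"
      unfolding Cab_def by (rule cINF_lower[OF bdd that])
    thus ?thesis using hmin by simp
  qed
  have Eu: "Kfun s u + lam1 * L2sq u = mu1 * Lpp p u + beta * r1 * coup r1 r2 u v"
  proof -
    have e: "(\<integral>z. dx u z * dx u z \<partial>lborel) + Efrac s u u + lam1 * (\<integral>z. u z * u z \<partial>lborel)
       = mu1 * (\<integral>z. \<bar>u z\<bar> powr (p - 2) * u z * u z \<partial>lborel)
         + beta * r1 * (\<integral>z. \<bar>u z\<bar> powr (r1 - 2) * u z * \<bar>v z\<bar> powr r2 * u z \<partial>lborel)"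
      using eq1 u by blast
    have i1: "(\<lambda>z. \<bar>u z\<bar> powr (p - 2) * u z * u z) = (\<lambda>z. \<bar>u z\<bar> powr p)" using powr_sq by auto
    have i2: "(\<lambda>z. \<bar>u z\<bar> powr (r1 - 2) * u z * \<bar>v z\<bar> powr r2 * u z) = (\<lambda>z. \<bar>u z\<bar> powr r1 * \<bar>v z\<bar> powr r2)"
    proof
      fix z
      have "\<bar>u z\<bar> powr (r1 - 2) * u z * \<bar>v z\<bar> powr r2 * u z = (\<bar>u z\<bar> powr (r1 - 2) * u z * u z) * \<bar>v z\<bar> powr r2"
        by (simp add: algebra_simps)
      thus "\<bar>u z\<bar> powr (r1 - 2) * u z * \<bar>v z\<bar> powr r2 * u z = \<bar>u z\<bar> powr r1 * \<bar>v z\<bar> powr r2"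
        by (simp add: powr_sq)
    qed
    show ?thesis using e unfolding i1 i2 Kfun_def L2sq_def Lpp_def coup_def by (simp add: power2_eq_square)
  qed
  have Ev: "Kfun s v + lam2 * L2sq v = mu2 * Lpp q v + beta * r2 * coup r2 r1 v u"
  proof -
    have e: "(\<integral>z. dx v z * dx v z \<partial>lborel) + Efrac s v v + lam2 * (\<integral>z. v z * v z \<partial>lborel)
       = mu2 * (\<integral>z. \<bar>v z\<bar> powr (q - 2) * v z * v z \<partial>lborel)
         + beta * r2 * (\<integral>z. \<bar>u z\<bar> powr r1 * \<bar>v z\<bar> powr (r2 - 2) * v z * v z \<partial>lborel)"
      using eq2 v by blast
    have i1: "(\<lambda>z. \<bar>v z\<bar> powr (q - 2) * v z * v z) = (\<lambda>z. \<bar>v z\<bar> powr q)" using powr_sq by auto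
    have i2: "(\<lambda>z. \<bar>u z\<bar> powr r1 * \<bar>v z\<bar> powr (r2 - 2) * v z * v z) = (\<lambda>z. \<bar>v z\<bar> powr r2 * \<bar>u z\<bar> powr r1)"
    proof
      fix z
      have "\<bar>u z\<bar> powr r1 * \<bar>v z\<bar> powr (r2 - 2) * v z * v z = (\<bar>v z\<bar> powr (r2 - 2) * v z * v z) * \<bar>u z\<bar> powr r1"
        by (simp add: algebra_simps)
      thus "\<bar>u z\<bar> powr r1 * \<bar>v z\<bar> powr (r2 - 2) * v z * v z = \<bar>v z\<bar> powr r2 * \<bar>u z\<bar> powr r1"
        by (simp add: powr_sq)
    qed
    show ?thesis using e unfolding i1 i2 Kfun_def L2sq_def Lpp_def coup_def by (simp add: power2_eq_square)
  qed
  have part_u: "lam1 > 0 \<longrightarrow> L2sq u = a"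
  proof
    assume lam: "lam1 > 0"
    show "L2sq u = a"
    proof (rule part1[OF hs hpar(1-3) hp(1) hq(1) hr(1) u v La Lb hnz(1) P _ Eu lam])
      fix w1 w2 assume "w1 \<in> H1s s" "w2 \<in> H1s s" "Pfun s p q r1 r2 mu1 mu2 beta w1 w2 = 0"
        "L2sq w1 \<le> a" "L2sq w2 \<le> b" "\<not> (AE z in lborel. w1 z = 0)"
      thus "Jfun s p q r1 r2 mu1 mu2 beta u v \<le> Jfun s p q r1 r2 mu1 mu2 beta w1 w2"
        by (intro minP) (auto simp: Pset_ab_def)
    qed
  qed
  have part_v: "lam2 > 0 \<longrightarrow> L2sq v = b"
  proof
    assume lam: "lam2 > 0"
    have hr': "2 * (1 + 3 * s) / (1 + s) < r2 + r1" using hr(1) by (simp add: add.commute)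
    have P': "Pfun s q p r2 r1 mu2 mu1 beta v u = 0" using P Pfun_swap by metis
    show "L2sq v = b"
    proof (rule part1[OF hs hpar(2) hpar(1) hpar(3) hq(1) hp(1) hr' v u Lb La hnz(2) P' _ Ev lam])
      fix w1 w2 assume a: "w1 \<in> H1s s" "w2 \<in> H1s s" "Pfun s q p r2 r1 mu2 mu1 beta w1 w2 = 0"
        "L2sq w1 \<le> b" "L2sq w2 \<le> a" "\<not> (AE z in lborel. w1 z = 0)"
      have "(w2, w1) \<in> Pset_ab s p q r1 r2 mu1 mu2 beta a b"
        using a Pfun_swap[of s p q r1 r2 mu1 mu2 beta w2 w1] by (auto simp: Pset_ab_def)
      hence "Jfun s p q r1 r2 mu1 mu2 beta u v \<le> Jfun s p q r1 r2 mu1 mu2 beta w2 w1" by (rule minP)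
      thus "Jfun s q p r2 r1 mu2 mu1 beta v u \<le> Jfun s q p r2 r1 mu2 mu1 beta w1 w2"
        using Jfun_swap by metis
    qed
  qed
  show ?thesis using part_u part_v by blast
qed

end
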